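(* Let $M\ge2$, $K\ge1$ be integers and let $\gamma_{0d},\sigma_{0d},\gamma_{0r},\sigma_{0r},\gamma_{rd},\sigma_{rd}>0$ ($r=1,\dots,K$) be constants. A message $m\in\{0,\dots,M-1\}$ is transmitted on the $(m+1)$-th of $M$ orthogonal carriers, and the destination observes vectors in $\mathbb{C}^M$ $$\mathbf{y}_{0d}=\sigma_{0d}\big(\sqrt{\gamma_{0d}}\,h_{0d}\mathbf{i}_{m+1}+\mathbf{n}_{0d}\big),\qquad \mathbf{y}_{rd}=\sigma_{0r}\sigma_{rd}\sqrt{\gamma_{0r}\gamma_{rd}}\,h_{0r}h_{rd}\mathbf{i}_{m+1}+\sigma_{0r}\sigma_{rd}\sqrt{\gamma_{rd}}\,h_{rd}\mathbf{n}_{0r}+\sigma_{rd}\mathbf{n}_{rd},\quad r=1,\dots,K,$$ where $\mathbf{i}_{m+1}$ is the $(m+1)$-th standard basis vector of $\mathbb{C}^M$, $\mathbf{y}_{ij}=[\mathrm{y}_{ij}(1),\dots,\mathrm{y}_{ij}(M)]^T$, and the scalars $h_{0d},h_{0r},h_{rd}\sim\mathcal{CN}(0,1)$ and vectors $\mathbf{n}_{0d},\mathbf{n}_{0r},\mathbf{n}_{rd}\sim\mathcal{CN}(\mathbf{0},\mathbf{I}_M)$ ($r=1,\dots,K$) are all mutually independent and independent of $m$. Then the maximum-likelihood detector of $m$ from $(\mathbf{y}_{0d},\mathbf{y}_{1d},\dots,\mathbf{y}_{Kd})$ is equivalently $$\hat m=\arg\max_{m\in\{0,\dots,M-1\}}\Bigg\{\frac{\gamma_{0d}}{1+\gamma_{0d}}\frac{|\mathrm{y}_{0d}(m+1)|^2}{\sigma_{0d}^2}+\sum_{r=1}^K\ln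 I\Big(\sigma_{0r}^2\gamma_{rd},\ (1+\gamma_{0r})\sigma_{0r}^2\gamma_{rd},\ \frac{\|\mathbf{y}_{rd}\|^2-|\mathrm{y}_{rd}(m+1)|^2}{\sigma_{rd}^2},\ \frac{|\mathrm{y}_{rd}(m+1)|^2}{\sigma_{rd}^2},\ M-1\Big)\Bigg\}.$$
   Context: $\mathcal{CN}(\boldsymbol{\mu},\boldsymbol{\Sigma})$ denotes a circularly symmetric complex Gaussian distribution; $\|\cdot\|$ is the Euclidean norm. For $\epsilon_1,\epsilon_2>0$, $\beta_1,\beta_2\ge 0$, $\lambda>0$, $$I(\epsilon_1,\epsilon_2,\beta_1,\beta_2,\lambda)=\int_0^\infty \frac{\exp\!\Big[-\Big(x+\frac{\beta_1}{1+\epsilon_1x}+\frac{\beta_2}{1+\epsilon_2x}\Big)\Big]}{(1+\epsilon_1x)^{\lambda}(1+\epsilon_2x)}\,dx.$$ (This model covers both the power-splitting and time-switching noncoherent amplify-and-forward energy-harvesting relay protocols via appropriate choices of the constants $\gamma,\sigma$.) *)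

theory Defs
  imports "HOL-Probability.Probability"
begin

text \<open>Links of the relay network: the direct link 0-d, the links 0-r and r-d.\<close>
datatype link = D0 | SR nat | RD nat

definition links :: "nat \<Rightarrow> link set" where
  "links K = insert D0 (SR ` {1..K} \<union> RD ` {1..K})"

definition CN01 :: "complex measure" where
  "CN01 = density lborel (\<lambda>z. ennreal (exp (- (cmod z)\<^sup>2) / pi))"

text \<open>CN(0, I_M) on C^M; vectors are functions on the index set {..<M} (index j = carrier j+1).\<close>
definition CNvec :: "nat \<Rightarrow> (nat \<Rightarrow> complex) measure" where
  "CNvec M = PiM {..<M} (\<lambda>_. CN01)"

definition fade_noise_law :: "nat \<Rightarrow> nat \<Rightarrow> ((link \<Rightarrow> complex) \<times> (link \<Rightarrow> nat \<Rightarrow> complex)) measure" where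
  "fade_noise_law K M = PiM (links K) (\<lambda>_. CN01) \<Otimes>\<^sub>M PiM (links K) (\<lambda>_. CNvec M)"

text \<open>Observation space: y r for r = 0 (direct link y_0d) and r = 1..K (y_rd), each in C^M,
  with reference (Lebesgue) measure.\<close>
definition obs_space :: "nat \<Rightarrow> nat \<Rightarrow> (nat \<Rightarrow> nat \<Rightarrow> complex) measure" where
  "obs_space K M = PiM {..K} (\<lambda>_. PiM {..<M} (\<lambda>_. (lborel :: complex measure)))"

definition unitv :: "nat \<Rightarrow> nat \<Rightarrow> complex" where
  "unitv m j = (if j = m then 1 else 0)"

definition obs :: "real \<Rightarrow> real \<Rightarrow> (nat \<Rightarrow> real) \<Rightarrow> (nat \<Rightarrow> real) \<Rightarrow> (nat \<Rightarrow> real) \<Rightarrow> (nat \<Rightarrow> real)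
    \<Rightarrow> nat \<Rightarrow> nat \<Rightarrow> nat \<Rightarrow> (link \<Rightarrow> complex) \<Rightarrow> (link \<Rightarrow> nat \<Rightarrow> complex) \<Rightarrow> nat \<Rightarrow> nat \<Rightarrow> complex" where
  "obs g0d s0d g0r s0r grd srd K M m h n =
     (\<lambda>r\<in>{..K}. \<lambda>j\<in>{..<M}.
        if r = 0 then complex_of_real s0d * (complex_of_real (sqrt g0d) * h D0 * unitv m j + n D0 j)
        else complex_of_real (s0r r * srd r * sqrt (g0r r * grd r)) * h (SR r) * h (RD r) * unitv m j
           + complex_of_real (s0r r * srd r * sqrt (grd r)) * h (RD r) * n (SR r) j
           + complex_of_real (srd r) * n (RD r) j)"

definition I_int :: "real \<Rightarrow> real \<Rightarrow> real \<Rightarrow> real \<Rightarrow> real \<Rightarrow> real" where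
  "I_int e1 e2 b1 b2 lam =
     (LBINT x:{0..}. exp (- (x + b1 / (1 + e1 * x) + b2 / (1 + e2 * x)))
                     / ((1 + e1 * x) powr lam * (1 + e2 * x)))"

definition ml_metric :: "real \<Rightarrow> real \<Rightarrow> (nat \<Rightarrow> real) \<Rightarrow> (nat \<Rightarrow> real) \<Rightarrow> (nat \<Rightarrow> real) \<Rightarrow> (nat \<Rightarrow> real)
    \<Rightarrow> nat \<Rightarrow> nat \<Rightarrow> (nat \<Rightarrow> nat \<Rightarrow> complex) \<Rightarrow> nat \<Rightarrow> real" where
  "ml_metric g0d s0d g0r s0r grd srd K M y m =
     g0d / (1 + g0d) * (cmod (y 0 m))\<^sup>2 / s0d\<^sup>2
     + (\<Sum>r = 1..K. ln (I_int ((s0r r)\<^sup>2 * grd r) ((1 + g0r r) * (s0r r)\<^sup>2 * grd r)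
            (((\<Sum>j<M. (cmod (y r j))\<^sup>2) - (cmod (y r m))\<^sup>2) / (srd r)\<^sup>2)
            ((cmod (y r m))\<^sup>2 / (srd r)\<^sup>2)
            (real M - 1)))"

definition argmax_set :: "nat \<Rightarrow> (nat \<Rightarrow> real) \<Rightarrow> nat set" where
  "argmax_set M f = {m \<in> {..<M}. \<forall>m'\<in>{..<M}. f m' \<le> f m}"

end

theory Submission
  imports Defs
begin

lemma emeasure_ball_complex:
  "emeasure (lborel::complex measure) {z. (cmod z)\<^sup>2 < b} = ennreal (pi * max b 0)"
proof (cases "b > 0")
  case True
  have "{z::complex. (cmod z)\<^sup>2 < b} = ball 0 (sqrt b)"
  proof (intro set_eqI iffI)
    fix z :: complex
    have e: "cmod z = sqrt ((cmod z)\<^sup>2)" by simp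
    show "z \<in> ball 0 (sqrt b)" if "z \<in> {z. (cmod z)\<^sup>2 < b}"
      using that by (simp add: dist_norm) (metis e real_sqrt_less_iff)
    show "z \<in> {z. (cmod z)\<^sup>2 < b}" if "z \<in> ball 0 (sqrt b)"
      using that by (simp add: dist_norm) (metis e real_sqrt_less_iff)
  qed
  then show ?thesis using True
    by (simp add: emeasure_ball unit_ball_vol_2 max_def)
next
  case False
  then have "{z::complex. (cmod z)\<^sup>2 < b} = {}"
    by (auto) (metis not_less zero_le_power2 order.strict_trans1)
  then show ?thesis using False by (simp add: max_def)
qed

lemma distr_cmod_sq:
  "distr (lborel::complex measure) borel (\<lambda>z. (cmod z)\<^sup>2) =
     density lborel (\<lambda>x. ennreal pi * indicator {0..} x)"
proof (rule measure_eqI_generator_eq_countable[where E="range lessThan" and \<Omega>=UNIV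
      and A="range (\<lambda>n::nat. {..<real n})"])
  show "Int_stable (range (lessThan :: real \<Rightarrow> _))"
    unfolding Int_stable_def by (auto simp: greaterThan_Int_greaterThan simp del: Int_iff)
  show "range lessThan \<subseteq> Pow (UNIV :: real set)" by auto
  show "sets (distr lborel borel (\<lambda>z::complex. (cmod z)\<^sup>2)) = sigma_sets UNIV (range lessThan)"
    by (simp add: borel_Iio)
  show "sets (density lborel (\<lambda>x. ennreal pi * indicator {0..} x)) = sigma_sets UNIV (range (lessThan::real\<Rightarrow>_))"
    by (simp add: borel_Iio)
  have L: "emeasure (distr (lborel::complex measure) borel (\<lambda>z. (cmod z)\<^sup>2)) {..<b} = ennreal (pi * max b 0)" for b
    by (subst emeasure_distr) (auto simp: vimage_def emeasure_ball_complex)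
  have R: "emeasure (density lborel (\<lambda>x. ennreal pi * indicator {0..} x)) {..<b} = ennreal (pi * max b 0)" for b :: real
  proof -
    have "emeasure (density lborel (\<lambda>x. ennreal pi * indicator {0..} x)) {..<b}
        = (\<integral>\<^sup>+x. ennreal pi * indicator {0..<b} x \<partial>lborel)"
      by (subst emeasure_density) (auto intro!: nn_integral_cong split: split_indicator)
    also have "\<dots> = ennreal pi * emeasure lborel {0..<b}"
      by (simp add: nn_integral_cmult)
    also have "\<dots> = ennreal (pi * max b 0)"
      by (auto simp: ennreal_mult max_def)
    finally show ?thesis .
  qed
  show "emeasure (distr lborel borel (\<lambda>z::complex. (cmod z)\<^sup>2)) X =
        emeasure (density lborel (\<lambda>x. ennreal pi * indicator {0..} x)) X"
    if "X \<in> range lessThan" for X using that L R by auto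
  show "range (\<lambda>n::nat. {..<real n}) \<subseteq> range lessThan" by auto
  show "\<Union> (range (\<lambda>n::nat. {..<real n})) = UNIV"
    by (auto intro: reals_Archimedean2)
  show "countable (range (\<lambda>n::nat. {..<real n}))" by auto
  show "emeasure (distr lborel borel (\<lambda>z::complex. (cmod z)\<^sup>2)) a \<noteq> \<infinity>"
    if "a \<in> range (\<lambda>n::nat. {..<real n})" for a using that L by auto
qed

lemma nn_integral_radial:
  fixes G :: "real \<Rightarrow> ennreal"
  assumes [measurable]: "G \<in> borel_measurable borel"
  shows "(\<integral>\<^sup>+z. G ((cmod z)\<^sup>2) \<partial>(lborel::complex measure)) = ennreal pi * (\<integral>\<^sup>+x. G x * indicator {0..} x \<partial>lborel)"
proof -
  have "(\<integral>\<^sup>+z. G ((cmod z)\<^sup>2) \<partial>(lborel::complex measure)) = (\<integral>\<^sup>+x. G x \<partial>distr lborel borel (\<lambda>z::complex. (cmod z)\<^sup>2))"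
    by (simp add: nn_integral_distr)
  also have "\<dots> = (\<integral>\<^sup>+x. ennreal pi * (G x * indicator {0..} x) \<partial>lborel)"
    by (simp add: distr_cmod_sq nn_integral_density mult_ac)
  also have "\<dots> = ennreal pi * (\<integral>\<^sup>+x. G x * indicator {0..} x \<partial>lborel)"
    by (simp add: nn_integral_cmult)
  finally show ?thesis .
qed

lemma nn_integral_exp_neg_pos: "(\<integral>\<^sup>+x. ennreal (exp (- x)) * indicator {0..} x \<partial>lborel) = 1"
proof -
  interpret prob_space "density lborel (exponential_density 1)"
    by (rule prob_space_exponential_density) simp
  have "(\<integral>\<^sup>+x. ennreal (exponential_density 1 x) \<partial>lborel) = 1"
    using emeasure_space_1 by (simp add: emeasure_density) 
  moreover have "(\<lambda>x. ennreal (exponential_density 1 x)) = (\<lambda>x. ennreal (exp (- x)) * indicator {0..} x)"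
    by (auto simp: exponential_density_def fun_eq_iff split: split_indicator)
  ultimately show ?thesis by simp
qed

lemma nn_integral_gauss_complex: "(\<integral>\<^sup>+z. ennreal (exp (- (cmod z)\<^sup>2)) \<partial>(lborel::complex measure)) = ennreal pi"
  using nn_integral_radial[of "\<lambda>x. ennreal (exp (-x))"] by (simp add: nn_integral_exp_neg_pos)

lemma nn_integral_lborel_complex_affine:
  fixes f :: "complex \<Rightarrow> ennreal" and c :: real and t :: complex
  assumes [measurable]: "f \<in> borel_measurable borel" and c: "c \<noteq> 0"
  shows "(\<integral>\<^sup>+z. f z \<partial>lborel) = ennreal (c\<^sup>2) * (\<integral>\<^sup>+z. f (t + c *\<^sub>R z) \<partial>lborel)"
proof -
  have "(\<integral>\<^sup>+z. f z \<partial>lborel) = (\<integral>\<^sup>+z. f z \<partial>density (distr lborel borel (\<lambda>x. t + c *\<^sub>R x)) (\<lambda>_. ennreal (\<bar>c\<bar> ^ DIM(complex))))"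
    using lborel_affine[OF c, of t] by simp
  also have "\<dots> = (\<integral>\<^sup>+z. ennreal (c\<^sup>2) * f (t + c *\<^sub>R z) \<partial>lborel)"
    by (simp add: nn_integral_density nn_integral_distr)
  also have "\<dots> = ennreal (c\<^sup>2) * (\<integral>\<^sup>+z. f (t + c *\<^sub>R z) \<partial>lborel)"
    by (simp add: nn_integral_cmult)
  finally show ?thesis .
qed

lemma nn_integral_gauss_shift:
  fixes w :: complex and a :: real
  assumes a: "a > 0"
  shows "(\<integral>\<^sup>+z. ennreal (exp (- a * (cmod (z - w))\<^sup>2)) \<partial>lborel) = ennreal (pi / a)"
proof -
  define c where "c = 1 / sqrt a"
  have c: "c \<noteq> 0" "c\<^sup>2 = 1 / a" using a by (auto simp: c_def power_divide)
  have "(\<integral>\<^sup>+z. ennreal (exp (- a * (cmod (z - w))\<^sup>2)) \<partial>lborel)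
      = ennreal (c\<^sup>2) * (\<integral>\<^sup>+z. ennreal (exp (- a * (cmod (w + c *\<^sub>R z - w))\<^sup>2)) \<partial>lborel)"
    by (rule nn_integral_lborel_complex_affine) (auto simp: c)
  also have "(\<lambda>z. ennreal (exp (- a * (cmod (w + c *\<^sub>R z - w))\<^sup>2))) = (\<lambda>z. ennreal (exp (- (cmod z)\<^sup>2)))"
    using a by (auto simp: fun_eq_iff power_mult_distrib c(2))
  finally show ?thesis using a
    by (simp add: nn_integral_gauss_complex c ennreal_mult'[symmetric])
qed

lemma complete_square:
  fixes z b t :: complex and s :: real
  assumes s: "s > 0"
  defines "A \<equiv> (s + (cmod t)\<^sup>2) / s"
  defines "p \<equiv> cnj t * b / complex_of_real (s + (cmod t)\<^sup>2)"
  shows "(cmod z)\<^sup>2 + (cmod (b - t * z))\<^sup>2 / s = A * (cmod (z - p))\<^sup>2 + (cmod b)\<^sup>2 / (s + (cmod t)\<^sup>2)"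
proof -
  define D where "D = s + (cmod t)\<^sup>2"
  have D: "D > 0" using s by (simp add: D_def add_pos_nonneg)
  have key: "s * D * (cmod z)\<^sup>2 + D * (cmod (b - t * z))\<^sup>2 = (cmod (of_real D * z - cnj t * b))\<^sup>2 + s * (cmod b)\<^sup>2"
  proof -
    obtain zr zi br bi tr ti where z: "z = Complex zr zi" and b: "b = Complex br bi" and t: "t = Complex tr ti"
      by (metis complex.exhaust)
    have Dd: "D = s + tr\<^sup>2 + ti\<^sup>2" by (simp add: D_def t cmod_power2)
    show ?thesis unfolding Dd
      apply (simp add: z b t cmod_power2)
      apply (simp add: power2_eq_square)
      by algebra
  qed
  have zp: "z - p = (of_real D * z - cnj t * b) / of_real D"
    using D by (simp add: p_def D_def[symmetric] field_simps)
  have "(cmod z)\<^sup>2 + (cmod (b - t * z))\<^sup>2 / s = (s * D * (cmod z)\<^sup>2 + D * (cmod (b - t * z))\<^sup>2) / (s * D)"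
    using s D by (simp add: field_simps)
  also have "\<dots> = ((cmod (of_real D * z - cnj t * b))\<^sup>2 + s * (cmod b)\<^sup>2) / (s * D)" by (simp add: key)
  also have "\<dots> = A * (cmod (z - p))\<^sup>2 + (cmod b)\<^sup>2 / D"
    unfolding zp A_def D_def[symmetric] using s D
    by (simp add: norm_divide power_divide field_simps power2_eq_square)
  finally show ?thesis by (simp add: D_def)
qed

lemma nn_integral_gauss_conv:
  fixes b t :: complex and s :: real
  assumes s: "s > 0"
  shows "(\<integral>\<^sup>+z. ennreal (exp (- (cmod z)\<^sup>2) / pi * (exp (- (cmod (b - t * z))\<^sup>2 / s) / (pi * s))) \<partial>lborel)
       = ennreal (exp (- (cmod b)\<^sup>2 / (s + (cmod t)\<^sup>2)) / (pi * (s + (cmod t)\<^sup>2)))"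
proof -
  define A where "A = (s + (cmod t)\<^sup>2) / s"
  define p where "p = cnj t * b / complex_of_real (s + (cmod t)\<^sup>2)"
  define K where "K = exp (- (cmod b)\<^sup>2 / (s + (cmod t)\<^sup>2)) / (pi * pi * s)"
  have pos: "s + (cmod t)\<^sup>2 > 0" using s by (simp add: add_pos_nonneg)
  have A: "A > 0" using pos s by (simp add: A_def)
  have K: "K \<ge> 0" using s by (simp add: K_def)
  have eq: "exp (- (cmod z)\<^sup>2) / pi * (exp (- (cmod (b - t * z))\<^sup>2 / s) / (pi * s))
        = K * exp (- A * (cmod (z - p))\<^sup>2)" for z
  proof -
    have "exp (- (cmod z)\<^sup>2) * exp (- (cmod (b - t * z))\<^sup>2 / s)
        = exp (- ((cmod z)\<^sup>2 + (cmod (b - t * z))\<^sup>2 / s))"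
      by (simp add: exp_add[symmetric])
    also have "\<dots> = exp (- (cmod b)\<^sup>2 / (s + (cmod t)\<^sup>2)) * exp (- A * (cmod (z - p))\<^sup>2)"
      unfolding complete_square[OF s, of z b t] A_def p_def by (simp add: exp_add[symmetric])
    finally show ?thesis by (simp add: K_def field_simps)
  qed
  have "(\<integral>\<^sup>+z. ennreal (exp (- (cmod z)\<^sup>2) / pi * (exp (- (cmod (b - t * z))\<^sup>2 / s) / (pi * s))) \<partial>lborel)
      = (\<integral>\<^sup>+z. ennreal K * ennreal (exp (- A * (cmod (z - p))\<^sup>2)) \<partial>lborel)"
    apply (rule nn_integral_cong)
    apply (subst eq)
    apply (rule ennreal_mult[OF K])
    by simp
  also have "\<dots> = ennreal K * ennreal (pi / A)"
    using nn_integral_gauss_shift[OF A, of p] by (simp add: nn_integral_cmult)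
  also have "\<dots> = ennreal (exp (- (cmod b)\<^sup>2 / (s + (cmod t)\<^sup>2)) / (pi * (s + (cmod t)\<^sup>2)))"
  proof -
    have p2: "pi * s + pi * (cmod t)\<^sup>2 > 0" "pi * (s + (cmod t)\<^sup>2) > 0"
      "pi * (pi * (s * s)) + pi * (pi * (s * (cmod t)\<^sup>2)) > 0" using pos s by (simp_all add: add_pos_nonneg)
    have "K * (pi / A) = exp (- (cmod b)\<^sup>2 / (s + (cmod t)\<^sup>2)) / (pi * (s + (cmod t)\<^sup>2))"
      unfolding K_def A_def using s pos p2 by (simp add: field_simps)
    then show ?thesis using K A by (simp add: ennreal_mult[symmetric])
  qed
  finally show ?thesis .
qed

definition cgd :: "real \<Rightarrow> complex \<Rightarrow> real" where
  "cgd s w = exp (- (cmod w)\<^sup>2 / s) / (pi * s)"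

lemma cgd_nonneg: "s > 0 \<Longrightarrow> cgd s w \<ge> 0"
  by (simp add: cgd_def)

lemma cgd_measurable[measurable]: "(\<lambda>w. cgd s (f w)) \<in> borel_measurable M" if [measurable]: "f \<in> borel_measurable M"
  for f :: "_ \<Rightarrow> complex"
  unfolding cgd_def by measurable

lemma CN01_cgd: "CN01 = density lborel (\<lambda>z. ennreal (cgd 1 z))"
  by (simp add: CN01_def cgd_def)

lemma sets_CN01[measurable_cong, simp]: "sets CN01 = sets borel"
  by (simp add: CN01_def)

lemma space_CN01[simp]: "space CN01 = UNIV"
  by (simp add: CN01_def)

lemma prob_space_CN01: "prob_space CN01"
proof
  have "emeasure CN01 (space CN01) = (\<integral>\<^sup>+z. ennreal (exp (- (cmod z)\<^sup>2) / pi) \<partial>lborel)"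
    by (simp add: CN01_def emeasure_density)
  also have "\<dots> = (\<integral>\<^sup>+z. ennreal (exp (- (cmod z)\<^sup>2)) * ennreal (1 / pi) \<partial>lborel)"
    by (intro nn_integral_cong) (simp add: ennreal_mult[symmetric] divide_inverse)
  also have "\<dots> = ennreal pi * ennreal (1 / pi)"
    by (simp add: nn_integral_multc nn_integral_gauss_complex)
  also have "\<dots> = 1"
    by (simp add: ennreal_mult[symmetric])
  finally show "emeasure CN01 (space CN01) = 1" .
qed

lemma nn_integral_CN01: "f \<in> borel_measurable borel \<Longrightarrow>
   (\<integral>\<^sup>+z. f z \<partial>CN01) = (\<integral>\<^sup>+z. ennreal (exp (- (cmod z)\<^sup>2) / pi) * f z \<partial>lborel)"
  by (simp add: CN01_def nn_integral_density)

lemma distr_CN01_affine: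
  fixes a :: complex and c :: real
  assumes c: "c > 0"
  shows "distr CN01 lborel (\<lambda>z. a + complex_of_real c * z) = density lborel (\<lambda>y. ennreal (cgd (c\<^sup>2) (y - a)))"
proof (rule measure_eqI)
  show "sets (distr CN01 lborel (\<lambda>z. a + complex_of_real c * z)) = sets (density lborel (\<lambda>y. ennreal (cgd (c\<^sup>2) (y - a))))"
    by simp
  fix A assume A: "A \<in> sets (distr CN01 lborel (\<lambda>z. a + complex_of_real c * z))"
  then have [measurable]: "A \<in> sets borel" by simp
  have "emeasure (distr CN01 lborel (\<lambda>z. a + complex_of_real c * z)) A
      = emeasure CN01 ((\<lambda>z. a + complex_of_real c * z) -` A \<inter> space CN01)"
    apply (rule emeasure_distr)
     apply (subst measurable_lborel1)
     apply measurable
    done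
  also have "\<dots> = (\<integral>\<^sup>+z. indicator ((\<lambda>z. a + complex_of_real c * z) -` A \<inter> space CN01) z \<partial>CN01)"
    by (rule nn_integral_indicator[symmetric]) measurable
  also have "\<dots> = (\<integral>\<^sup>+z. indicator A (a + complex_of_real c * z) \<partial>CN01)"
    by (intro nn_integral_cong) (auto split: split_indicator)
  also have "\<dots> = (\<integral>\<^sup>+z. ennreal (exp (- (cmod z)\<^sup>2) / pi) * indicator A (a + complex_of_real c * z) \<partial>lborel)"
    by (simp add: nn_integral_CN01)
  also have "\<dots> = (\<integral>\<^sup>+z. ennreal (c\<^sup>2) * (ennreal (cgd (c\<^sup>2) (a + c *\<^sub>R z - a)) * indicator A (a + c *\<^sub>R z)) \<partial>lborel)"
  proof (intro nn_integral_cong)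
    fix z :: complex
    have "cmod (complex_of_real c * z) ^ 2 / c\<^sup>2 = (cmod z)\<^sup>2"
      using c by (simp add: norm_mult power_mult_distrib)
    then have "exp (- (cmod z)\<^sup>2) / pi = c\<^sup>2 * cgd (c\<^sup>2) (a + c *\<^sub>R z - a)"
      using c by (simp add: cgd_def scaleR_conv_of_real)
    then show "ennreal (exp (- (cmod z)\<^sup>2) / pi) * indicator A (a + complex_of_real c * z) =
          ennreal (c\<^sup>2) * (ennreal (cgd (c\<^sup>2) (a + c *\<^sub>R z - a)) * indicator A (a + c *\<^sub>R z))"
      using c by (simp add: scaleR_conv_of_real ennreal_mult cgd_nonneg mult.assoc)
  qed
  also have "\<dots> = (\<integral>\<^sup>+y. ennreal (cgd (c\<^sup>2) (y - a)) * indicator A y \<partial>lborel)"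
    using c by (subst nn_integral_lborel_complex_affine[where c=c and t=a]) (auto simp: nn_integral_cmult)
  also have "\<dots> = emeasure (density lborel (\<lambda>y. ennreal (cgd (c\<^sup>2) (y - a)))) A"
    by (simp add: emeasure_density)
  finally show "emeasure (distr CN01 lborel (\<lambda>z. a + complex_of_real c * z)) A =
      emeasure (density lborel (\<lambda>y. ennreal (cgd (c\<^sup>2) (y - a)))) A" .
qed

lemma distr_PiM_density_const:
  fixes M :: "'b measure" and Q :: "'c measure"
  assumes fin: "finite I" and M: "prob_space M" and Q: "sigma_finite_measure Q"
    and \<tau>[measurable]: "\<And>i. i \<in> I \<Longrightarrow> \<tau> i \<in> measurable M Q"
    and d[measurable]: "\<And>i. i \<in> I \<Longrightarrow> d i \<in> borel_measurable Q"
    and eq: "\<And>i. i \<in> I \<Longrightarrow> distr M Q (\<tau> i) = density Q (d i)"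
  shows "distr (PiM I (\<lambda>_. M)) (PiM I (\<lambda>_. Q)) (\<lambda>x. \<lambda>i\<in>I. \<tau> i (x i))
       = density (PiM I (\<lambda>_. Q)) (\<lambda>y. \<Prod>i\<in>I. d i (y i))"
proof -
  define D where "D i = (if i \<in> I then density Q (d i) else Q)" for i
  have sD: "sets (D i) = sets Q" for i by (simp add: D_def)
  have sfD: "sigma_finite_measure (D i)" for i
  proof (cases "i \<in> I")
    case True
    then have "D i = distr M Q (\<tau> i)" by (simp add: D_def eq)
    moreover have "prob_space (distr M Q (\<tau> i))" using True M by (simp add: prob_space.prob_space_distr)
    ultimately show ?thesis by (simp add: prob_space_imp_sigma_finite)
  qed (simp add: D_def Q)
  interpret PD: product_sigma_finite D
    unfolding product_sigma_finite_def using sfD by simp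
  interpret PQ: product_sigma_finite "\<lambda>_. Q"
    unfolding product_sigma_finite_def using Q by simp
  interpret PM: product_sigma_finite "\<lambda>_. M"
    unfolding product_sigma_finite_def using M by (simp add: prob_space_imp_sigma_finite)
  have sPi: "sets (PiM I D) = sets (PiM I (\<lambda>_. Q))"
    by (rule sets_PiM_cong) (simp_all add: sD)
  have meas: "(\<lambda>x. \<lambda>i\<in>I. \<tau> i (x i)) \<in> measurable (PiM I (\<lambda>_. M)) (PiM I (\<lambda>_. Q))"
  proof (rule measurable_restrict)
    fix i assume i: "i \<in> I"
    show "(\<lambda>x. \<tau> i (x i)) \<in> measurable (PiM I (\<lambda>_. M)) Q"
      using measurable_compose[OF measurable_component_singleton[OF i] \<tau>[OF i]] by simp
  qed
  have L: "distr (PiM I (\<lambda>_. M)) (PiM I (\<lambda>_. Q)) (\<lambda>x. \<lambda>i\<in>I. \<tau> i (x i)) = PiM I D"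
  proof (rule PD.PiM_eqI[OF fin])
    show "sets (distr (PiM I (\<lambda>_. M)) (PiM I (\<lambda>_. Q)) (\<lambda>x. \<lambda>i\<in>I. \<tau> i (x i))) = sets (PiM I D)"
      using sPi by simp
    fix A assume A: "\<And>i. i \<in> I \<Longrightarrow> A i \<in> sets (D i)"
    then have AQ: "\<And>i. i \<in> I \<Longrightarrow> A i \<in> sets Q" by (simp add: sD)
    have pre: "(\<lambda>x. \<lambda>i\<in>I. \<tau> i (x i)) -` PiE I A \<inter> space (PiM I (\<lambda>_. M))
        = PiE I (\<lambda>i. \<tau> i -` A i \<inter> space M)"
      by (auto simp: space_PiM PiE_iff extensional_def)
    have "emeasure (distr (PiM I (\<lambda>_. M)) (PiM I (\<lambda>_. Q)) (\<lambda>x. \<lambda>i\<in>I. \<tau> i (x i))) (PiE I A)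
        = emeasure (PiM I (\<lambda>_. M)) (PiE I (\<lambda>i. \<tau> i -` A i \<inter> space M))"
      using AQ by (subst emeasure_distr[OF meas]) (auto simp: pre intro!: sets_PiM_I_finite fin)
    also have "\<dots> = (\<Prod>i\<in>I. emeasure M (\<tau> i -` A i \<inter> space M))"
      using AQ by (intro PM.emeasure_PiM fin) (auto intro: measurable_sets)
    also have "\<dots> = (\<Prod>i\<in>I. emeasure (D i) (A i))"
      using AQ by (intro prod.cong refl) (simp add: D_def eq[symmetric] emeasure_distr)
    finally show "emeasure (distr (PiM I (\<lambda>_. M)) (PiM I (\<lambda>_. Q)) (\<lambda>x. \<lambda>i\<in>I. \<tau> i (x i))) (PiE I A)
        = (\<Prod>i\<in>I. emeasure (D i) (A i))" .
  qed
  have R: "density (PiM I (\<lambda>_. Q)) (\<lambda>y. \<Prod>i\<in>I. d i (y i)) = PiM I D"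
  proof (rule PD.PiM_eqI[OF fin])
    show "sets (density (PiM I (\<lambda>_. Q)) (\<lambda>y. \<Prod>i\<in>I. d i (y i))) = sets (PiM I D)"
      using sPi by simp
    fix A assume A: "\<And>i. i \<in> I \<Longrightarrow> A i \<in> sets (D i)"
    then have AQ[measurable]: "\<And>i. i \<in> I \<Longrightarrow> A i \<in> sets Q" by (simp add: sD)
    have PA: "PiE I A \<in> sets (PiM I (\<lambda>_. Q))" using AQ by (auto intro!: sets_PiM_I_finite fin)
    have "emeasure (density (PiM I (\<lambda>_. Q)) (\<lambda>y. \<Prod>i\<in>I. d i (y i))) (PiE I A)
        = (\<integral>\<^sup>+y. (\<Prod>i\<in>I. d i (y i)) * indicator (PiE I A) y \<partial>PiM I (\<lambda>_. Q))"
      using PA by (simp add: emeasure_density)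
    also have "\<dots> = (\<integral>\<^sup>+y. (\<Prod>i\<in>I. d i (y i) * indicator (A i) (y i)) \<partial>PiM I (\<lambda>_. Q))"
    proof (intro nn_integral_cong)
      fix y assume "y \<in> space (PiM I (\<lambda>_. Q))"
      then have ext: "y \<in> extensional I" by (simp add: space_PiM PiE_iff)
      have "indicator (PiE I A) y = (\<Prod>i\<in>I. indicator (A i) (y i) :: ennreal)"
      proof (cases "y \<in> PiE I A")
        case True then show ?thesis by (auto simp: PiE_iff)
      next
        case False
        with ext obtain i where "i \<in> I" "y i \<notin> A i" by (auto simp: PiE_iff)
        then have "(\<Prod>i\<in>I. indicator (A i) (y i) :: ennreal) = 0"
          using fin by (intro prod_zero) (auto intro!: bexI[of _ i])
        with False show ?thesis by simp
      qed
      then show "(\<Prod>i\<in>I. d i (y i)) * indicator (PiE I A) y = (\<Prod>i\<in>I. d i (y i) * indicator (A i) (y i))"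
        by (simp add: prod.distrib)
    qed
    also have "\<dots> = (\<Prod>i\<in>I. \<integral>\<^sup>+y. d i y * indicator (A i) y \<partial>Q)"
      by (rule PQ.product_nn_integral_prod[OF fin]) measurable
    also have "\<dots> = (\<Prod>i\<in>I. emeasure (D i) (A i))"
      by (intro prod.cong refl) (simp add: D_def emeasure_density)
    finally show "emeasure (density (PiM I (\<lambda>_. Q)) (\<lambda>y. \<Prod>i\<in>I. d i (y i))) (PiE I A) = (\<Prod>i\<in>I. emeasure (D i) (A i))" .
  qed
  show ?thesis using L R by simp
qed

definition Tm :: "real \<Rightarrow> real \<Rightarrow> (nat \<Rightarrow> real) \<Rightarrow> (nat \<Rightarrow> real) \<Rightarrow> (nat \<Rightarrow> real) \<Rightarrow> (nat \<Rightarrow> real)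
    \<Rightarrow> nat \<Rightarrow> (link \<Rightarrow> complex) \<Rightarrow> (link \<Rightarrow> nat \<Rightarrow> complex) \<Rightarrow> nat \<Rightarrow> nat \<Rightarrow> complex" where
  "Tm g0d s0d g0r s0r grd srd m h x r j =
     (if r = 0 then complex_of_real s0d * (complex_of_real (sqrt g0d) * h D0 * unitv m j)
      else complex_of_real (s0r r * srd r * sqrt (g0r r * grd r)) * h (SR r) * h (RD r) * unitv m j
           + complex_of_real (s0r r * srd r * sqrt (grd r)) * h (RD r) * x (SR r) j)"

definition cc :: "real \<Rightarrow> (nat \<Rightarrow> real) \<Rightarrow> nat \<Rightarrow> real" where
  "cc s0d srd r = (if r = 0 then s0d else srd r)"

definition lf :: "nat \<Rightarrow> link" where
  "lf r = (if r = 0 then D0 else RD r)"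

definition G0 where
  "G0 g0d s0d g0r s0r grd srd K M m h x y =
     (\<Prod>r\<in>{..K}. \<Prod>j\<in>{..<M}. ennreal (cgd ((cc s0d srd r)\<^sup>2) (y r j - Tm g0d s0d g0r s0r grd srd m h x r j)))"

lemma obs_eq:
  "obs g0d s0d g0r s0r grd srd K M m h n =
    (\<lambda>r\<in>{..K}. \<lambda>j\<in>{..<M}. Tm g0d s0d g0r s0r grd srd m h n r j + complex_of_real (cc s0d srd r) * n (lf r) j)"
  unfolding obs_def Tm_def cc_def lf_def
  by (intro restrict_ext) (auto simp: distrib_left)

lemma meas_comp1:
  fixes N :: "'i \<Rightarrow> 'b::topological_space measure"
  assumes "\<And>i. sets (N i) = sets borel"
  shows "(\<lambda>h. h l) \<in> borel_measurable (PiM L N)"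
proof (cases "l \<in> L")
  case True
  then have "(\<lambda>h. h l) \<in> measurable (PiM L N) (N l)" by simp
  then show ?thesis using assms by (simp add: measurable_cong_sets[OF refl assms])
next
  case False
  have eq: "\<And>h. h \<in> space (PiM L N) \<Longrightarrow> h l = undefined"
    using False by (auto simp: space_PiM PiE_def extensional_def)
  show ?thesis by (subst measurable_cong[OF eq]) simp_all
qed

lemma meas_comp2:
  fixes N :: "'b::topological_space measure"
  assumes "sets N = sets borel"
  shows "(\<lambda>h. h l j) \<in> borel_measurable (PiM L (\<lambda>_. PiM J (\<lambda>_. N)))"
proof (cases "l \<in> L")
  case True
  then have a: "(\<lambda>h. h l) \<in> measurable (PiM L (\<lambda>_. PiM J (\<lambda>_. N))) (PiM J (\<lambda>_. N))" by simp
  have b: "(\<lambda>w. w j) \<in> borel_measurable (PiM J (\<lambda>_. N))"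
    by (rule meas_comp1) (simp add: assms)
  show ?thesis using measurable_compose[OF a b] by simp
next
  case False
  have eq: "\<And>h. h \<in> space (PiM L (\<lambda>_. PiM J (\<lambda>_. N))) \<Longrightarrow> h l j = undefined j"
    using False by (auto simp: space_PiM PiE_def extensional_def)
  show ?thesis by (subst measurable_cong[OF eq]) simp_all
qed

lemma meas_CN01_comp[measurable (raw)]: "(\<lambda>h. h l) \<in> borel_measurable (PiM L (\<lambda>_. CN01))"
  by (rule meas_comp1) simp
lemma meas_CN01_comp'[measurable_dest]:
  assumes "f \<in> measurable N (PiM L (\<lambda>_. CN01))" "g \<in> measurable L' N" shows "(\<lambda>x. (f (g x)) l) \<in> borel_measurable L'"
  using measurable_compose[OF measurable_compose[OF assms(2) assms(1)] meas_CN01_comp] by simp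
lemma meas_CNvec_comp[measurable (raw)]: "(\<lambda>h. h l j) \<in> borel_measurable (PiM L (\<lambda>_. CNvec M))"
  unfolding CNvec_def by (rule meas_comp2) simp
lemma meas_CNvec_comp'[measurable_dest]:
  assumes "f \<in> measurable N (PiM L (\<lambda>_. CNvec M))" "g \<in> measurable L' N" shows "(\<lambda>x. (f (g x)) l j) \<in> borel_measurable L'"
  using measurable_compose[OF measurable_compose[OF assms(2) assms(1)] meas_CNvec_comp] by simp
lemma meas_obs_comp[measurable (raw)]: "(\<lambda>y. y r j) \<in> borel_measurable (obs_space K M)"
  unfolding obs_space_def by (rule meas_comp2) simp
lemma meas_obs_comp'[measurable_dest]:
  assumes "f \<in> measurable N (obs_space K M)" "g \<in> measurable L' N" shows "(\<lambda>x. (f (g x)) r j) \<in> borel_measurable L'"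
  using measurable_compose[OF measurable_compose[OF assms(2) assms(1)] meas_obs_comp] by simp
lemma meas_vec_comp[measurable (raw)]: "(\<lambda>y. y j) \<in> borel_measurable (CNvec M)"
  unfolding CNvec_def by (rule meas_comp1) simp
lemma meas_vec_comp'[measurable_dest]:
  assumes "f \<in> measurable N (CNvec M)" "g \<in> measurable L' N" shows "(\<lambda>x. (f (g x)) j) \<in> borel_measurable L'"
  using measurable_compose[OF measurable_compose[OF assms(2) assms(1)] meas_vec_comp] by simp
lemma meas_vecl_comp[measurable (raw)]: "(\<lambda>y. y j) \<in> borel_measurable (PiM J (\<lambda>_. (lborel::complex measure)))"
  by (rule meas_comp1) simp
lemma meas_vecl_comp'[measurable_dest]:
  assumes "f \<in> measurable N (PiM J (\<lambda>_. (lborel::complex measure)))" "g \<in> measurable L' N" shows "(\<lambda>x. (f (g x)) j) \<in> borel_measurable L'"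
  using measurable_compose[OF measurable_compose[OF assms(2) assms(1)] meas_vecl_comp] by simp

lemma Tm_meas[measurable]:
  assumes [measurable]: "h \<in> measurable N (PiM L (\<lambda>_. CN01))" "x \<in> measurable N (PiM L' (\<lambda>_. CNvec M))"
  shows "(\<lambda>w. Tm g0d s0d g0r s0r grd srd m (h w) (x w) r j) \<in> borel_measurable N"
  unfolding Tm_def by measurable

lemma obs_meas[measurable]:
  assumes [measurable]: "h \<in> measurable N (PiM L (\<lambda>_. CN01))" "x \<in> measurable N (PiM L' (\<lambda>_. CNvec M))"
  shows "(\<lambda>w. obs g0d s0d g0r s0r grd srd K M m (h w) (x w)) \<in> measurable N (obs_space K M)"
  unfolding obs_eq obs_space_def
  apply (rule measurable_restrict)
  apply (rule measurable_restrict)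
  unfolding measurable_lborel1
  by measurable

lemma prob_space_CNvec: "prob_space (CNvec M)"
  unfolding CNvec_def by (intro prob_space_PiM prob_space_CN01)

lemma sigma_finite_PiM_lborel: "finite I \<Longrightarrow> sigma_finite_measure (PiM I (\<lambda>_. (lborel :: complex measure)))"
proof -
  assume fin: "finite I"
  interpret product_sigma_finite "\<lambda>_. (lborel :: complex measure)"
    unfolding product_sigma_finite_def by (simp add: sigma_finite_lborel)
  show ?thesis by (rule sigma_finite[OF fin])
qed

lemma links_split: "links K = SR ` {1..K} \<union> insert D0 (RD ` {1..K})"
  by (auto simp: links_def)

lemma links_disj: "SR ` {1..K} \<inter> insert D0 (RD ` {1..K}) = {}"
  by auto

lemma lf_in: "r \<in> {..K} \<Longrightarrow> lf r \<in> insert D0 (RD ` {1..K})"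
  by (auto simp: lf_def)

lemma inj_lf: "inj_on lf {..K}"
  by (auto simp: inj_on_def lf_def split: if_splits)

lemma G0_meas[measurable]:
  assumes [measurable]: "h \<in> measurable N (PiM L (\<lambda>_. CN01))" "x \<in> measurable N (PiM L' (\<lambda>_. CNvec M))"
    "y \<in> measurable N (obs_space K M)"
  shows "(\<lambda>w. G0 g0d s0d g0r s0r grd srd K M m (h w) (x w) (y w)) \<in> borel_measurable N"
  unfolding G0_def by measurable

context
  fixes g0d s0d :: real and g0r s0r grd srd :: "nat \<Rightarrow> real" and K M :: nat
  assumes s0d: "s0d > 0" and posr: "\<forall>r\<in>{1..K}. srd r > 0"
begin

lemma cc_pos: "r \<in> {..K} \<Longrightarrow> cc s0d srd r > 0"
  using s0d posr by (auto simp: cc_def)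

lemma cgd_shift_meas: "(\<lambda>z. ennreal (cgd s (z - c))) \<in> borel_measurable (lborel::complex measure)"
  unfolding cgd_def by measurable

lemma aff_meas: "(\<lambda>z::complex. a + b * z) \<in> borel_measurable CN01"
  by (simp add: measurable_cong_sets[OF sets_CN01 refl] borel_measurable_continuous_onI continuous_intros)

lemma distr_block:
  assumes r: "r \<in> {..K}"
  shows "distr (CNvec M) (PiM {..<M} (\<lambda>_. lborel)) (\<lambda>w. \<lambda>j\<in>{..<M}. T j + complex_of_real (cc s0d srd r) * w j)
       = density (PiM {..<M} (\<lambda>_. lborel)) (\<lambda>w. \<Prod>j\<in>{..<M}. ennreal (cgd ((cc s0d srd r)\<^sup>2) (w j - T j)))"
proof -
  define tau where "tau = (\<lambda>j z. T j + complex_of_real (cc s0d srd r) * z)"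
  define d where "d = (\<lambda>j z. ennreal (cgd ((cc s0d srd r)\<^sup>2) (z - T j)))"
  have "distr (PiM {..<M} (\<lambda>_. CN01)) (PiM {..<M} (\<lambda>_. lborel)) (\<lambda>x. \<lambda>i\<in>{..<M}. tau i (x i))
       = density (PiM {..<M} (\<lambda>_. lborel)) (\<lambda>y. \<Prod>i\<in>{..<M}. d i (y i))"
  proof (rule distr_PiM_density_const)
    show "prob_space CN01" by (rule prob_space_CN01)
    show "sigma_finite_measure (lborel :: complex measure)" by (rule sigma_finite_lborel)
    show "tau i \<in> CN01 \<rightarrow>\<^sub>M lborel" for i unfolding tau_def measurable_lborel1 by (rule aff_meas)
    show "d i \<in> borel_measurable lborel" for i unfolding d_def by (rule cgd_shift_meas)
    show "distr CN01 lborel (tau i) = density lborel (d i)" for i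
      unfolding tau_def d_def using distr_CN01_affine[OF cc_pos[OF r]] by simp
  qed simp
  then show ?thesis by (simp add: CNvec_def tau_def d_def)
qed

lemma distr_all:
  "distr (PiM {..K} (\<lambda>_. CNvec M)) (obs_space K M)
      (\<lambda>v. \<lambda>r\<in>{..K}. (\<lambda>w. \<lambda>j\<in>{..<M}. T r j + complex_of_real (cc s0d srd r) * w j) (v r))
   = density (obs_space K M) (\<lambda>y. \<Prod>r\<in>{..K}. \<Prod>j\<in>{..<M}. ennreal (cgd ((cc s0d srd r)\<^sup>2) (y r j - T r j)))"
proof -
  define tau where "tau = (\<lambda>r w. \<lambda>j\<in>{..<M}. T r j + complex_of_real (cc s0d srd r) * w j)"
  define d where "d = (\<lambda>r w. \<Prod>j\<in>{..<M}. ennreal (cgd ((cc s0d srd r)\<^sup>2) (w j - T r j)))"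
  have "distr (PiM {..K} (\<lambda>_. CNvec M)) (PiM {..K} (\<lambda>_. PiM {..<M} (\<lambda>_. lborel))) (\<lambda>x. \<lambda>i\<in>{..K}. tau i (x i))
       = density (PiM {..K} (\<lambda>_. PiM {..<M} (\<lambda>_. lborel))) (\<lambda>y. \<Prod>i\<in>{..K}. d i (y i))"
  proof (rule distr_PiM_density_const)
    show "prob_space (CNvec M)" by (rule prob_space_CNvec)
    show "sigma_finite_measure (PiM {..<M} (\<lambda>_. lborel :: complex measure))" by (rule sigma_finite_PiM_lborel) simp
    show "tau i \<in> CNvec M \<rightarrow>\<^sub>M PiM {..<M} (\<lambda>_. lborel)" for i
      unfolding tau_def
      apply (rule measurable_restrict)
      unfolding measurable_lborel1 by measurable
    show "d i \<in> borel_measurable (PiM {..<M} (\<lambda>_. lborel))" for i unfolding d_def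
      apply (rule borel_measurable_prod_ennreal)
      subgoal for j using measurable_compose[OF meas_vecl_comp[of j "{..<M}"] cgd_shift_meas[unfolded measurable_lborel2]] by simp
      done
    show "distr (CNvec M) (PiM {..<M} (\<lambda>_. lborel)) (tau i) = density (PiM {..<M} (\<lambda>_. lborel)) (d i)"
      if "i \<in> {..K}" for i
      unfolding tau_def d_def by (rule distr_block[OF that])
  qed simp
  then show ?thesis by (simp add: obs_space_def tau_def d_def)
qed

lemma stepA:
  assumes \<phi>[measurable]: "\<phi> \<in> borel_measurable (obs_space K M)"
    and h: "h \<in> space (PiM (links K) (\<lambda>_. CN01))"
  shows "(\<integral>\<^sup>+n. \<phi> (obs g0d s0d g0r s0r grd srd K M m h n) \<partial>PiM (links K) (\<lambda>_. CNvec M))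
       = (\<integral>\<^sup>+x. (\<integral>\<^sup>+y. G0 g0d s0d g0r s0r grd srd K M m h x y * \<phi> y \<partial>obs_space K M) \<partial>PiM (SR ` {1..K}) (\<lambda>_. CNvec M))"
proof -
  let ?Ls = "SR ` {1..K}" and ?Lf = "insert D0 (RD ` {1..K})"
  let ?V = "\<lambda>_::link. CNvec M" and ?W = "\<lambda>_::nat. CNvec M"
  interpret V: product_sigma_finite ?V
    unfolding product_sigma_finite_def by (simp add: prob_space_CNvec prob_space_imp_sigma_finite)
  have hm[measurable]: "(\<lambda>x. h) \<in> measurable N (PiM (links K) (\<lambda>_. CN01))" for N
    using h by simp
  define \<Phi> where "\<Phi> x = (\<lambda>v. \<lambda>r\<in>{..K}. (\<lambda>w. \<lambda>j\<in>{..<M}. Tm g0d s0d g0r s0r grd srd m h x r j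
      + complex_of_real (cc s0d srd r) * w j) (v r))" for x
  have fm: "(\<lambda>n. \<phi> (obs g0d s0d g0r s0r grd srd K M m h n)) \<in> borel_measurable (PiM (?Ls \<union> ?Lf) ?V)"
    by measurable
  have "(\<integral>\<^sup>+n. \<phi> (obs g0d s0d g0r s0r grd srd K M m h n) \<partial>PiM (links K) ?V)
      = (\<integral>\<^sup>+n. \<phi> (obs g0d s0d g0r s0r grd srd K M m h n) \<partial>PiM (?Ls \<union> ?Lf) ?V)"
    by (simp add: links_split)
  also have "\<dots> = (\<integral>\<^sup>+x. (\<integral>\<^sup>+u. \<phi> (obs g0d s0d g0r s0r grd srd K M m h (merge ?Ls ?Lf (x, u))) \<partial>PiM ?Lf ?V) \<partial>PiM ?Ls ?V)"
    by (rule V.product_nn_integral_fold[OF links_disj _ _ fm]) auto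
  also have "\<dots> = (\<integral>\<^sup>+x. (\<integral>\<^sup>+y. G0 g0d s0d g0r s0r grd srd K M m h x y * \<phi> y \<partial>obs_space K M) \<partial>PiM ?Ls ?V)"
  proof (intro nn_integral_cong)
    fix x assume x: "x \<in> space (PiM ?Ls ?V)"
    have xm[measurable]: "(\<lambda>_. x) \<in> measurable N (PiM ?Ls ?V)" for N using x by simp
    have "(\<integral>\<^sup>+u. \<phi> (obs g0d s0d g0r s0r grd srd K M m h (merge ?Ls ?Lf (x, u))) \<partial>PiM ?Lf ?V)
        = (\<integral>\<^sup>+u. \<phi> (\<Phi> x (\<lambda>r\<in>{..K}. u (lf r))) \<partial>PiM ?Lf ?V)"
    proof (intro nn_integral_cong arg_cong[where f=\<phi>])
      fix u
      show "obs g0d s0d g0r s0r grd srd K M m h (merge ?Ls ?Lf (x, u)) = \<Phi> x (\<lambda>r\<in>{..K}. u (lf r))"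
        unfolding obs_eq \<Phi>_def
        apply (intro restrict_ext)
        apply (simp add: lf_def Tm_def merge_def)
        apply auto
        done
    qed
    also have "\<dots> = (\<integral>\<^sup>+v. \<phi> (\<Phi> x v) \<partial>PiM {..K} ?W)"
    proof -
      have rm: "(\<lambda>u. \<lambda>r\<in>{..K}. u (lf r)) \<in> measurable (PiM ?Lf ?V) (PiM {..K} ?W)"
        by (rule measurable_restrict) (auto intro!: measurable_component_singleton simp: lf_def)
      have \<Phi>m: "\<Phi> x \<in> measurable (PiM {..K} ?W) (obs_space K M)"
        unfolding \<Phi>_def obs_space_def
        apply (rule measurable_restrict)
        apply (rule measurable_restrict)
        unfolding measurable_lborel1 by measurable
      have "distr (PiM ?Lf ?V) (PiM {..K} ?W) (\<lambda>u. \<lambda>r\<in>{..K}. u (lf r)) = PiM {..K} ?W"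
        using distr_PiM_reindex[of ?Lf ?V lf "{..K}"] lf_in by (simp add: prob_space_CNvec inj_lf Pi_iff)
      then show ?thesis
        using nn_integral_distr[OF rm, of "\<lambda>v. \<phi> (\<Phi> x v)"] \<Phi>m by simp
    qed
    also have "\<dots> = (\<integral>\<^sup>+y. \<phi> y \<partial>distr (PiM {..K} ?W) (obs_space K M) (\<Phi> x))"
    proof -
      have \<Phi>m: "\<Phi> x \<in> measurable (PiM {..K} ?W) (obs_space K M)"
        unfolding \<Phi>_def obs_space_def
        apply (rule measurable_restrict)
        apply (rule measurable_restrict)
        unfolding measurable_lborel1 by measurable
      show ?thesis by (simp add: nn_integral_distr[OF \<Phi>m])
    qed
    also have "\<dots> = (\<integral>\<^sup>+y. G0 g0d s0d g0r s0r grd srd K M m h x y * \<phi> y \<partial>obs_space K M)"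
      unfolding \<Phi>_def distr_all G0_def
      by (subst nn_integral_density) (auto intro!: borel_measurable_prod_ennreal)
    finally show "(\<integral>\<^sup>+u. \<phi> (obs g0d s0d g0r s0r grd srd K M m h (merge ?Ls ?Lf (x, u))) \<partial>PiM ?Lf ?V)
        = (\<integral>\<^sup>+y. G0 g0d s0d g0r s0r grd srd K M m h x y * \<phi> y \<partial>obs_space K M)" .
  qed
  finally show ?thesis .
qed

lemma stepB:
  assumes \<phi>[measurable]: "\<phi> \<in> borel_measurable (obs_space K M)"
  shows "(\<integral>\<^sup>+\<omega>. \<phi> (obs g0d s0d g0r s0r grd srd K M m (fst \<omega>) (snd \<omega>)) \<partial>fade_noise_law K M)
     = (\<integral>\<^sup>+y. (\<integral>\<^sup>+h. (\<integral>\<^sup>+x. G0 g0d s0d g0r s0r grd srd K M m h x y \<partial>PiM (SR ` {1..K}) (\<lambda>_. CNvec M)) \<partial>PiM (links K) (\<lambda>_. CN01)) * \<phi> y \<partial>obs_space K M)"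
proof -
  let ?H = "PiM (links K) (\<lambda>_. CN01)" and ?N = "PiM (links K) (\<lambda>_. CNvec M)"
  let ?X = "PiM (SR ` {1..K}) (\<lambda>_. CNvec M)" and ?S = "obs_space K M"
  have pH: "prob_space ?H" by (intro prob_space_PiM prob_space_CN01)
  have pN: "prob_space ?N" by (intro prob_space_PiM prob_space_CNvec)
  have pX: "prob_space ?X" by (intro prob_space_PiM prob_space_CNvec)
  have sS: "sigma_finite_measure ?S"
  proof -
    interpret product_sigma_finite "\<lambda>_::nat. PiM {..<M} (\<lambda>_. (lborel :: complex measure))"
      unfolding product_sigma_finite_def by (simp add: sigma_finite_PiM_lborel)
    show ?thesis unfolding obs_space_def by (rule sigma_finite) simp
  qed
  interpret HN: pair_sigma_finite ?H ?N
    using pH pN by (simp add: pair_sigma_finite_def prob_space_imp_sigma_finite)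
  interpret XS: pair_sigma_finite ?X ?S
    using pX sS by (simp add: pair_sigma_finite_def prob_space_imp_sigma_finite)
  interpret HS: pair_sigma_finite ?H ?S
    using pH sS by (simp add: pair_sigma_finite_def prob_space_imp_sigma_finite)
  interpret X: sigma_finite_measure ?X using pX by (simp add: prob_space_imp_sigma_finite)
  have "(\<integral>\<^sup>+\<omega>. \<phi> (obs g0d s0d g0r s0r grd srd K M m (fst \<omega>) (snd \<omega>)) \<partial>fade_noise_law K M)
      = (\<integral>\<^sup>+h. (\<integral>\<^sup>+n. \<phi> (obs g0d s0d g0r s0r grd srd K M m h n) \<partial>?N) \<partial>?H)"
  proof -
    have m: "(\<lambda>\<omega>. \<phi> (obs g0d s0d g0r s0r grd srd K M m (fst \<omega>) (snd \<omega>))) \<in> borel_measurable (?H \<Otimes>\<^sub>M ?N)"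
      by measurable
    show ?thesis unfolding fade_noise_law_def using HN.M2.nn_integral_fst[OF m] by simp
  qed
  also have "\<dots> = (\<integral>\<^sup>+h. (\<integral>\<^sup>+x. (\<integral>\<^sup>+y. G0 g0d s0d g0r s0r grd srd K M m h x y * \<phi> y \<partial>?S) \<partial>?X) \<partial>?H)"
    by (intro nn_integral_cong stepA \<phi>)
  also have "\<dots> = (\<integral>\<^sup>+h. (\<integral>\<^sup>+y. (\<integral>\<^sup>+x. G0 g0d s0d g0r s0r grd srd K M m h x y * \<phi> y \<partial>?X) \<partial>?S) \<partial>?H)"
  proof (intro nn_integral_cong)
    fix h assume h: "h \<in> space ?H"
    have [measurable]: "(\<lambda>x. h) \<in> measurable N ?H" for N using h by simp
    show "(\<integral>\<^sup>+x. (\<integral>\<^sup>+y. G0 g0d s0d g0r s0r grd srd K M m h x y * \<phi> y \<partial>?S) \<partial>?X)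
        = (\<integral>\<^sup>+y. (\<integral>\<^sup>+x. G0 g0d s0d g0r s0r grd srd K M m h x y * \<phi> y \<partial>?X) \<partial>?S)"
      by (rule XS.Fubini'[symmetric]) measurable
  qed
  also have "\<dots> = (\<integral>\<^sup>+y. (\<integral>\<^sup>+h. (\<integral>\<^sup>+x. G0 g0d s0d g0r s0r grd srd K M m h x y * \<phi> y \<partial>?X) \<partial>?H) \<partial>?S)"
    by (rule HS.Fubini'[symmetric]) measurable
  also have "\<dots> = (\<integral>\<^sup>+y. (\<integral>\<^sup>+h. (\<integral>\<^sup>+x. G0 g0d s0d g0r s0r grd srd K M m h x y \<partial>?X) \<partial>?H) * \<phi> y \<partial>?S)"
  proof (intro nn_integral_cong)
    fix y assume y: "y \<in> space ?S"
    have [measurable]: "(\<lambda>_. y) \<in> measurable N ?S" for N using y by simp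
    have "(\<integral>\<^sup>+h. (\<integral>\<^sup>+x. G0 g0d s0d g0r s0r grd srd K M m h x y * \<phi> y \<partial>?X) \<partial>?H)
        = (\<integral>\<^sup>+h. (\<integral>\<^sup>+x. G0 g0d s0d g0r s0r grd srd K M m h x y \<partial>?X) * \<phi> y \<partial>?H)"
    proof (intro nn_integral_cong)
      fix h assume h: "h \<in> space ?H"
      have [measurable]: "(\<lambda>x. h) \<in> measurable N ?H" for N using h by simp
      show "(\<integral>\<^sup>+x. G0 g0d s0d g0r s0r grd srd K M m h x y * \<phi> y \<partial>?X) = (\<integral>\<^sup>+x. G0 g0d s0d g0r s0r grd srd K M m h x y \<partial>?X) * \<phi> y"
        by (rule nn_integral_multc) measurable
    qed
    also have "\<dots> = (\<integral>\<^sup>+h. (\<integral>\<^sup>+x. G0 g0d s0d g0r s0r grd srd K M m h x y \<partial>?X) \<partial>?H) * \<phi> y"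
      by (rule nn_integral_multc) measurable
    finally show "(\<integral>\<^sup>+h. (\<integral>\<^sup>+x. G0 g0d s0d g0r s0r grd srd K M m h x y * \<phi> y \<partial>?X) \<partial>?H)
        = (\<integral>\<^sup>+h. (\<integral>\<^sup>+x. G0 g0d s0d g0r s0r grd srd K M m h x y \<partial>?X) \<partial>?H) * \<phi> y" .
  qed
  finally show ?thesis .
qed

end

lemma cgd_nonneg': "s \<ge> 0 \<Longrightarrow> cgd s w \<ge> 0"
  by (simp add: cgd_def)

lemma cgd_conv:
  assumes s: "s > 0"
  shows "(\<integral>\<^sup>+z. ennreal (cgd s (b - t * z)) \<partial>CN01) = ennreal (cgd (s + (cmod t)\<^sup>2) b)"
proof -
  have "(\<integral>\<^sup>+z. ennreal (cgd s (b - t * z)) \<partial>CN01)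
      = (\<integral>\<^sup>+z. ennreal (exp (- (cmod z)\<^sup>2) / pi) * ennreal (cgd s (b - t * z)) \<partial>lborel)"
    by (rule nn_integral_CN01) (simp add: cgd_def)
  also have "\<dots> = (\<integral>\<^sup>+z. ennreal (exp (- (cmod z)\<^sup>2) / pi * (exp (- (cmod (b - t * z))\<^sup>2 / s) / (pi * s))) \<partial>lborel)"
    using s by (intro nn_integral_cong) (simp add: ennreal_mult[symmetric] cgd_def)
  also have "\<dots> = ennreal (cgd (s + (cmod t)\<^sup>2) b)"
    using nn_integral_gauss_conv[OF s] by (simp add: cgd_def)
  finally show ?thesis .
qed

lemma cgd_aff_meas: "(\<lambda>z. ennreal (cgd s (a - c * z))) \<in> borel_measurable CN01"
  unfolding cgd_def by measurable

lemma one_coord: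
  assumes s: "s > 0" and m: "m < M"
  shows "(\<integral>\<^sup>+z. (\<Prod>j\<in>{..<M}. ennreal (cgd s (b j - c * z * unitv m j))) \<partial>CN01)
       = (\<Prod>j\<in>{..<M} - {m}. ennreal (cgd s (b j))) * ennreal (cgd (s + (cmod c)\<^sup>2) (b m))"
proof -
  have "(\<lambda>z. (\<Prod>j\<in>{..<M}. ennreal (cgd s (b j - c * z * unitv m j))))
      = (\<lambda>z. ennreal (cgd s (b m - c * z)) * (\<Prod>j\<in>{..<M} - {m}. ennreal (cgd s (b j))))"
  proof
    fix z
    have "(\<Prod>j\<in>{..<M}. ennreal (cgd s (b j - c * z * unitv m j)))
        = ennreal (cgd s (b m - c * z * unitv m m)) * (\<Prod>j\<in>{..<M} - {m}. ennreal (cgd s (b j - c * z * unitv m j)))"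
      using m by (subst prod.remove[of _ m]) auto
    also have "(\<Prod>j\<in>{..<M} - {m}. ennreal (cgd s (b j - c * z * unitv m j))) = (\<Prod>j\<in>{..<M} - {m}. ennreal (cgd s (b j)))"
      by (intro prod.cong) (auto simp: unitv_def)
    finally show "(\<Prod>j\<in>{..<M}. ennreal (cgd s (b j - c * z * unitv m j)))
        = ennreal (cgd s (b m - c * z)) * (\<Prod>j\<in>{..<M} - {m}. ennreal (cgd s (b j)))"
      by (simp add: unitv_def)
  qed
  moreover have "(\<integral>\<^sup>+z. ennreal (cgd s (b m - c * z)) * (\<Prod>j\<in>{..<M} - {m}. ennreal (cgd s (b j))) \<partial>CN01)
      = ennreal (cgd (s + (cmod c)\<^sup>2) (b m)) * (\<Prod>j\<in>{..<M} - {m}. ennreal (cgd s (b j)))"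
    by (subst nn_integral_multc[OF cgd_aff_meas]) (simp add: cgd_conv[OF s])
  ultimately show ?thesis by (simp add: mult.commute)
qed

lemma nn_integral_PiM_prod_reindex:
  fixes N :: "'b measure" and \<iota> :: "'a \<Rightarrow> 'c"
  assumes fin: "finite A" and inj: "inj_on \<iota> A" and N: "sigma_finite_measure N"
    and f: "\<And>a. a \<in> A \<Longrightarrow> f a \<in> borel_measurable N"
  shows "(\<integral>\<^sup>+x. (\<Prod>a\<in>A. f a (x (\<iota> a))) \<partial>PiM (\<iota> ` A) (\<lambda>_. N)) = (\<Prod>a\<in>A. \<integral>\<^sup>+w. f a w \<partial>N)"
proof -
  interpret PN: product_sigma_finite "\<lambda>_::'c. N"
    unfolding product_sigma_finite_def using N by simp
  define F where "F l = f (the_inv_into A \<iota> l)" for l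
  have F: "F (\<iota> a) = f a" if "a \<in> A" for a
    using that inj by (simp add: F_def the_inv_into_f_f)
  have "(\<integral>\<^sup>+x. (\<Prod>a\<in>A. f a (x (\<iota> a))) \<partial>PiM (\<iota> ` A) (\<lambda>_. N))
      = (\<integral>\<^sup>+x. (\<Prod>l\<in>\<iota> ` A. F l (x l)) \<partial>PiM (\<iota> ` A) (\<lambda>_. N))"
    by (simp add: prod.reindex[OF inj] F cong: prod.cong)
  also have "\<dots> = (\<Prod>l\<in>\<iota> ` A. \<integral>\<^sup>+w. F l w \<partial>N)"
    by (rule PN.product_nn_integral_prod) (use fin f F in auto)
  also have "\<dots> = (\<Prod>a\<in>A. \<integral>\<^sup>+w. f a w \<partial>N)"
    by (simp add: prod.reindex[OF inj] F cong: prod.cong)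
  finally show ?thesis .
qed

definition fI :: "real \<Rightarrow> real \<Rightarrow> real \<Rightarrow> real \<Rightarrow> real \<Rightarrow> real \<Rightarrow> real" where
  "fI e1 e2 b1 b2 lam x = exp (- (x + b1 / (1 + e1 * x) + b2 / (1 + e2 * x))) / ((1 + e1 * x) powr lam * (1 + e2 * x))"

lemma I_int_fI: "I_int e1 e2 b1 b2 lam = (\<integral>x. indicator {0..} x * fI e1 e2 b1 b2 lam x \<partial>lborel)"
  by (simp add: I_int_def fI_def set_lebesgue_integral_def)

lemma fI_bounds:
  assumes "e1 \<ge> 0" "e2 \<ge> 0" "b1 \<ge> 0" "b2 \<ge> 0" "lam \<ge> 0" "x \<ge> 0"
  shows "fI e1 e2 b1 b2 lam x > 0" "fI e1 e2 b1 b2 lam x \<le> exp (- x)"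
proof -
  have p1: "1 + e1 * x \<ge> 1" "1 + e2 * x \<ge> 1" using assms by auto
  then have d: "(1 + e1 * x) powr lam * (1 + e2 * x) \<ge> 1"
    using assms by (metis ge_one_powr_ge_zero mult_ge1_I powr_zero_eq_one)
  show "fI e1 e2 b1 b2 lam x > 0" unfolding fI_def using d by simp
  have "exp (- (x + b1 / (1 + e1 * x) + b2 / (1 + e2 * x))) \<le> exp (- x)"
  proof -
    have "b1 / (1 + e1 * x) \<ge> 0" "b2 / (1 + e2 * x) \<ge> 0" using assms p1 by simp_all
    then show ?thesis by simp
  qed
  moreover have "exp (- (x + b1 / (1 + e1 * x) + b2 / (1 + e2 * x))) / ((1 + e1 * x) powr lam * (1 + e2 * x))
      \<le> exp (- (x + b1 / (1 + e1 * x) + b2 / (1 + e2 * x)))"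
    using divide_left_mono[OF d, of "exp (- (x + b1 / (1 + e1 * x) + b2 / (1 + e2 * x)))"] d by simp
  ultimately show "fI e1 e2 b1 b2 lam x \<le> exp (- x)" unfolding fI_def by linarith
qed

lemma I_int_nn:
  assumes a: "e1 \<ge> 0" "e2 \<ge> 0" "b1 \<ge> 0" "b2 \<ge> 0" "lam \<ge> 0"
  shows "(\<integral>\<^sup>+x. ennreal (fI e1 e2 b1 b2 lam x) * indicator {0..} x \<partial>lborel) = ennreal (I_int e1 e2 b1 b2 lam)"
    and "I_int e1 e2 b1 b2 lam > 0"
proof -
  let ?f = "fI e1 e2 b1 b2 lam"
  have fm[measurable]: "?f \<in> borel_measurable borel" unfolding fI_def by measurable
  have ie: "integrable lborel (\<lambda>x. indicator {0..} x * exp (- x) :: real)"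
  proof (rule integrableI_nonneg)
    show "(\<lambda>x. indicator {0..} x * exp (- x) :: real) \<in> borel_measurable lborel" by measurable
    show "AE x in lborel. 0 \<le> (indicator {0..} x * exp (- x) :: real)" by auto
    have "(\<integral>\<^sup>+x. ennreal (indicator {0..} x * exp (- x)) \<partial>lborel) = (\<integral>\<^sup>+x. ennreal (exp (- x)) * indicator {0..} x \<partial>lborel)"
      by (intro nn_integral_cong) (auto split: split_indicator)
    then show "(\<integral>\<^sup>+x. ennreal (indicator {0..} x * exp (- x)) \<partial>lborel) < \<infinity>"
      by (simp add: nn_integral_exp_neg_pos)
  qed
  have ig: "integrable lborel (\<lambda>x. indicator {0..} x * ?f x)"
  proof (rule Bochner_Integration.integrable_bound[OF ie])
    show "(\<lambda>x. indicator {0..} x * ?f x) \<in> borel_measurable lborel" by measurable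
    show "AE x in lborel. norm (indicator {0..} x * ?f x) \<le> norm (indicator {0..} x * exp (- x) :: real)"
      using fI_bounds[OF a] by (auto split: split_indicator simp: less_imp_le)
  qed
  have "(\<integral>\<^sup>+x. ennreal (?f x) * indicator {0..} x \<partial>lborel) = (\<integral>\<^sup>+x. ennreal (indicator {0..} x * ?f x) \<partial>lborel)"
    by (intro nn_integral_cong) (auto split: split_indicator)
  also have "\<dots> = ennreal (I_int e1 e2 b1 b2 lam)"
    unfolding I_int_fI
    by (rule nn_integral_eq_integral[OF ig]) (use fI_bounds[OF a] in \<open>auto split: split_indicator simp: less_imp_le\<close>)
  finally show eq: "(\<integral>\<^sup>+x. ennreal (?f x) * indicator {0..} x \<partial>lborel) = ennreal (I_int e1 e2 b1 b2 lam)" .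
  have "(\<integral>\<^sup>+x. ennreal (?f x) * indicator {0..} x \<partial>lborel) \<noteq> 0"
  proof
    assume "(\<integral>\<^sup>+x. ennreal (?f x) * indicator {0..} x \<partial>lborel) = 0"
    then have "AE x in lborel. ennreal (?f x) * indicator {0..} x = 0"
      by (subst (asm) nn_integral_0_iff_AE) auto
    moreover have "AE x in lborel. ennreal (?f x) * indicator {0..} x = 0 \<longrightarrow> x \<notin> {0::real..}"
      by (intro AE_I2) (use fI_bounds(1)[OF a] in \<open>auto split: split_indicator simp: ennreal_eq_0_iff not_le\<close>)
    ultimately have "AE x in lborel. x \<notin> {0::real..}"
      by eventually_elim auto
    then have "emeasure lborel {0::real..} = 0"
      by (subst (asm) AE_iff_measurable[of "{0..}"]) auto
    moreover have "emeasure lborel {0::real..1} \<le> emeasure lborel {0::real..}"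
      by (intro emeasure_mono) auto
    ultimately show False by simp
  qed
  with eq have "ennreal (I_int e1 e2 b1 b2 lam) \<noteq> 0" by simp
  moreover have "I_int e1 e2 b1 b2 lam \<ge> 0"
    unfolding I_int_fI using fI_bounds[OF a]
    by (intro integral_nonneg_AE) (auto split: split_indicator simp: less_imp_le)
  ultimately show "I_int e1 e2 b1 b2 lam > 0"
    by (simp add: ennreal_eq_0_iff)
qed

definition a1 :: "(nat \<Rightarrow> real) \<Rightarrow> (nat \<Rightarrow> real) \<Rightarrow> (nat \<Rightarrow> real) \<Rightarrow> (nat \<Rightarrow> real) \<Rightarrow> nat \<Rightarrow> real" where
  "a1 g0r s0r grd srd r = s0r r * srd r * sqrt (g0r r * grd r)"
definition a2 :: "(nat \<Rightarrow> real) \<Rightarrow> (nat \<Rightarrow> real) \<Rightarrow> (nat \<Rightarrow> real) \<Rightarrow> nat \<Rightarrow> real" where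
  "a2 s0r grd srd r = s0r r * srd r * sqrt (grd r)"

context
  fixes g0d s0d :: real and g0r s0r grd srd :: "nat \<Rightarrow> real" and K M m :: nat
  assumes g0d: "g0d > 0" and s0d: "s0d > 0"
    and posr: "\<forall>r\<in>{1..K}. g0r r > 0 \<and> s0r r > 0 \<and> grd r > 0 \<and> srd r > 0"
    and m: "m < M"
begin

definition P0 :: "(nat \<Rightarrow> nat \<Rightarrow> complex) \<Rightarrow> complex \<Rightarrow> ennreal" where
  "P0 y z = (\<Prod>j\<in>{..<M}. ennreal (cgd (s0d\<^sup>2) (y 0 j - complex_of_real (s0d * sqrt g0d) * z * unitv m j)))"

definition Er :: "(nat \<Rightarrow> nat \<Rightarrow> complex) \<Rightarrow> nat \<Rightarrow> complex \<Rightarrow> complex \<Rightarrow> ennreal" where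
  "Er y r hR hS = (\<Prod>j\<in>{..<M}. ennreal (cgd ((srd r)\<^sup>2 + (cmod (complex_of_real (a2 s0r grd srd r) * hR))\<^sup>2)
      (y r j - (complex_of_real (a1 g0r s0r grd srd r) * hR) * hS * unitv m j)))"

lemma srd_pos: "r \<in> {1..K} \<Longrightarrow> srd r > 0"
  using posr by auto

lemma Xint:
  "(\<integral>\<^sup>+x. G0 g0d s0d g0r s0r grd srd K M m h x y \<partial>PiM (SR ` {1..K}) (\<lambda>_. CNvec M))
    = P0 y (h D0) * (\<Prod>r\<in>{1..K}. Er y r (h (RD r)) (h (SR r)))"
proof -
  define b where "b r j = y r j - (complex_of_real (a1 g0r s0r grd srd r) * h (RD r)) * h (SR r) * unitv m j" for r j
  define t where "t r = complex_of_real (a2 s0r grd srd r) * h (RD r)" for r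
  define B where "B r w = (\<Prod>j\<in>{..<M}. ennreal (cgd ((srd r)\<^sup>2) (b r j - t r * w j)))" for r w
  have Bm: "B r \<in> borel_measurable (CNvec M)" for r
    unfolding B_def by measurable
  have G0eq: "G0 g0d s0d g0r s0r grd srd K M m h x y = P0 y (h D0) * (\<Prod>r\<in>{1..K}. B r (x (SR r)))" for x
  proof -
    have "{..K} = insert 0 {1..K}" by auto
    then have "G0 g0d s0d g0r s0r grd srd K M m h x y
      = (\<Prod>j\<in>{..<M}. ennreal (cgd ((cc s0d srd 0)\<^sup>2) (y 0 j - Tm g0d s0d g0r s0r grd srd m h x 0 j)))
        * (\<Prod>r\<in>{1..K}. \<Prod>j\<in>{..<M}. ennreal (cgd ((cc s0d srd r)\<^sup>2) (y r j - Tm g0d s0d g0r s0r grd srd m h x r j)))"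
      unfolding G0_def by simp
    also have "(\<Prod>j\<in>{..<M}. ennreal (cgd ((cc s0d srd 0)\<^sup>2) (y 0 j - Tm g0d s0d g0r s0r grd srd m h x 0 j))) = P0 y (h D0)"
      unfolding P0_def by (intro prod.cong refl) (simp add: cc_def Tm_def mult.assoc)
    also have "(\<Prod>r\<in>{1..K}. \<Prod>j\<in>{..<M}. ennreal (cgd ((cc s0d srd r)\<^sup>2) (y r j - Tm g0d s0d g0r s0r grd srd m h x r j)))
        = (\<Prod>r\<in>{1..K}. B r (x (SR r)))"
      unfolding B_def b_def t_def
      by (intro prod.cong refl) (auto simp: cc_def Tm_def a1_def a2_def algebra_simps)
    finally show ?thesis .
  qed
  have "(\<integral>\<^sup>+x. G0 g0d s0d g0r s0r grd srd K M m h x y \<partial>PiM (SR ` {1..K}) (\<lambda>_. CNvec M))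
      = (\<integral>\<^sup>+x. P0 y (h D0) * (\<Prod>r\<in>{1..K}. B r (x (SR r))) \<partial>PiM (SR ` {1..K}) (\<lambda>_. CNvec M))"
    by (simp add: G0eq)
  also have "\<dots> = P0 y (h D0) * (\<integral>\<^sup>+x. (\<Prod>r\<in>{1..K}. B r (x (SR r))) \<partial>PiM (SR ` {1..K}) (\<lambda>_. CNvec M))"
    apply (rule nn_integral_cmult)
    apply (rule borel_measurable_prod_ennreal)
    subgoal for r using measurable_compose[OF measurable_component_singleton[of "SR r" "SR`{1..K}" "\<lambda>_. CNvec M"] Bm[of r]] by simp
    done
  also have "(\<integral>\<^sup>+x. (\<Prod>r\<in>{1..K}. B r (x (SR r))) \<partial>PiM (SR ` {1..K}) (\<lambda>_. CNvec M)) = (\<Prod>r\<in>{1..K}. \<integral>\<^sup>+w. B r w \<partial>CNvec M)"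
    by (rule nn_integral_PiM_prod_reindex) (auto simp: Bm prob_space_CNvec prob_space_imp_sigma_finite inj_on_def)
  also have "(\<Prod>r\<in>{1..K}. \<integral>\<^sup>+w. B r w \<partial>CNvec M) = (\<Prod>r\<in>{1..K}. Er y r (h (RD r)) (h (SR r)))"
  proof (intro prod.cong refl)
    fix r assume r: "r \<in> {1..K}"
    interpret PC: product_sigma_finite "\<lambda>_::nat. CN01"
      unfolding product_sigma_finite_def by (simp add: prob_space_CN01 prob_space_imp_sigma_finite)
    have "(\<integral>\<^sup>+w. B r w \<partial>CNvec M) = (\<Prod>j\<in>{..<M}. \<integral>\<^sup>+z. ennreal (cgd ((srd r)\<^sup>2) (b r j - t r * z)) \<partial>CN01)"
      unfolding B_def CNvec_def
      by (rule PC.product_nn_integral_prod) (auto simp: cgd_aff_meas)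
    also have "\<dots> = Er y r (h (RD r)) (h (SR r))"
      unfolding Er_def using srd_pos[OF r]
      by (intro prod.cong refl) (simp add: cgd_conv b_def t_def)
    finally show "(\<integral>\<^sup>+w. B r w \<partial>CNvec M) = Er y r (h (RD r)) (h (SR r))" .
  qed
  finally show ?thesis .
qed


lemma Er_meas[measurable]:
  assumes [measurable]: "fR \<in> borel_measurable N" "fS \<in> borel_measurable N"
  shows "(\<lambda>w. Er y r (fR w) (fS w)) \<in> borel_measurable N"
  unfolding Er_def cgd_def by measurable

lemma P0_meas[measurable]:
  assumes [measurable]: "f \<in> borel_measurable N"
  shows "(\<lambda>w. P0 y (f w)) \<in> borel_measurable N"
  unfolding P0_def cgd_def by measurable

lemma lf_image: "lf ` {..K} = insert D0 (RD ` {1..K})"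
  by (auto simp: lf_def image_iff intro!: bexI[of _ 0])

lemma Hint:
  "(\<integral>\<^sup>+h. P0 y (h D0) * (\<Prod>r\<in>{1..K}. Er y r (h (RD r)) (h (SR r))) \<partial>PiM (links K) (\<lambda>_. CN01))
    = (\<integral>\<^sup>+z. P0 y z \<partial>CN01) * (\<Prod>r\<in>{1..K}. \<integral>\<^sup>+hR. (\<integral>\<^sup>+hS. Er y r hR hS \<partial>CN01) \<partial>CN01)"
proof -
  let ?Lf = "insert D0 (RD ` {1..K})" and ?Ls = "SR ` {1..K}"
  interpret PC: product_sigma_finite "\<lambda>_::link. CN01"
    unfolding product_sigma_finite_def by (simp add: prob_space_CN01 prob_space_imp_sigma_finite)
  interpret C: sigma_finite_measure CN01 by (simp add: prob_space_CN01 prob_space_imp_sigma_finite)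
  have sfC: "sigma_finite_measure CN01" by (simp add: prob_space_CN01 prob_space_imp_sigma_finite)
  have L: "links K = ?Lf \<union> ?Ls" by (auto simp: links_def)
  have disj: "?Lf \<inter> ?Ls = {}" by auto
  define R where "R r hR = (\<integral>\<^sup>+hS. Er y r hR hS \<partial>CN01)" for r hR
  have Rm: "R r \<in> borel_measurable CN01" for r
    unfolding R_def by measurable
  define F where "F r = (if r = 0 then P0 y else R r)" for r
  have Fm: "F r \<in> borel_measurable CN01" for r
    unfolding F_def by (auto simp: Rm)
  have fm: "(\<lambda>h. P0 y (h D0) * (\<Prod>r\<in>{1..K}. Er y r (h (RD r)) (h (SR r)))) \<in> borel_measurable (PiM (?Lf \<union> ?Ls) (\<lambda>_. CN01))"
    by measurable
  have "(\<integral>\<^sup>+h. P0 y (h D0) * (\<Prod>r\<in>{1..K}. Er y r (h (RD r)) (h (SR r))) \<partial>PiM (links K) (\<lambda>_. CN01))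
    = (\<integral>\<^sup>+u. (\<integral>\<^sup>+z. P0 y (merge ?Lf ?Ls (u, z) D0) * (\<Prod>r\<in>{1..K}. Er y r (merge ?Lf ?Ls (u, z) (RD r)) (merge ?Lf ?Ls (u, z) (SR r)))
        \<partial>PiM ?Ls (\<lambda>_. CN01)) \<partial>PiM ?Lf (\<lambda>_. CN01))"
    unfolding L by (rule PC.product_nn_integral_fold[OF disj _ _ fm]) auto
  also have "\<dots> = (\<integral>\<^sup>+u. P0 y (u D0) * (\<Prod>r\<in>{1..K}. R r (u (RD r))) \<partial>PiM ?Lf (\<lambda>_. CN01))"
  proof (intro nn_integral_cong)
    fix u
    have "(\<integral>\<^sup>+z. P0 y (merge ?Lf ?Ls (u, z) D0) * (\<Prod>r\<in>{1..K}. Er y r (merge ?Lf ?Ls (u, z) (RD r)) (merge ?Lf ?Ls (u, z) (SR r)))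
        \<partial>PiM ?Ls (\<lambda>_. CN01))
      = (\<integral>\<^sup>+z. P0 y (u D0) * (\<Prod>r\<in>{1..K}. Er y r (u (RD r)) (z (SR r))) \<partial>PiM ?Ls (\<lambda>_. CN01))"
      by (intro nn_integral_cong arg_cong2[where f="(*)"] prod.cong refl) (auto simp: merge_def)
    also have "\<dots> = P0 y (u D0) * (\<integral>\<^sup>+z. (\<Prod>r\<in>{1..K}. Er y r (u (RD r)) (z (SR r))) \<partial>PiM ?Ls (\<lambda>_. CN01))"
      apply (rule nn_integral_cmult)
      apply (rule borel_measurable_prod_ennreal)
      subgoal for r by measurable
      done
    also have "(\<integral>\<^sup>+z. (\<Prod>r\<in>{1..K}. Er y r (u (RD r)) (z (SR r))) \<partial>PiM ?Ls (\<lambda>_. CN01)) = (\<Prod>r\<in>{1..K}. R r (u (RD r)))"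
      unfolding R_def by (rule nn_integral_PiM_prod_reindex) (auto simp: sfC inj_on_def)
    finally show "(\<integral>\<^sup>+z. P0 y (merge ?Lf ?Ls (u, z) D0) * (\<Prod>r\<in>{1..K}. Er y r (merge ?Lf ?Ls (u, z) (RD r)) (merge ?Lf ?Ls (u, z) (SR r)))
        \<partial>PiM ?Ls (\<lambda>_. CN01)) = P0 y (u D0) * (\<Prod>r\<in>{1..K}. R r (u (RD r)))" .
  qed
  also have "\<dots> = (\<integral>\<^sup>+u. (\<Prod>r\<in>{..K}. F r (u (lf r))) \<partial>PiM (lf ` {..K}) (\<lambda>_. CN01))"
  proof -
    have "{..K} = insert 0 {1..K}" by auto
    then have "(\<Prod>r\<in>{..K}. F r (u (lf r))) = P0 y (u D0) * (\<Prod>r\<in>{1..K}. R r (u (RD r)))" for u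
      by (simp add: F_def lf_def)
    then show ?thesis by (simp add: lf_image)
  qed
  also have "\<dots> = (\<Prod>r\<in>{..K}. \<integral>\<^sup>+w. F r w \<partial>CN01)"
    by (rule nn_integral_PiM_prod_reindex) (auto simp: sfC inj_lf Fm)
  also have "\<dots> = (\<integral>\<^sup>+z. P0 y z \<partial>CN01) * (\<Prod>r\<in>{1..K}. \<integral>\<^sup>+hR. (\<integral>\<^sup>+hS. Er y r hR hS \<partial>CN01) \<partial>CN01)"
  proof -
    have "{..K} = insert 0 {1..K}" by auto
    moreover have "R r = (\<lambda>hR. \<integral>\<^sup>+hS. Er y r hR hS \<partial>CN01)" for r by (simp add: R_def fun_eq_iff)
    ultimately show ?thesis by (simp add: F_def)
  qed
  finally show ?thesis .
qed

lemma P0int: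
  "(\<integral>\<^sup>+z. P0 y z \<partial>CN01) = ennreal ((\<Prod>j\<in>{..<M} - {m}. cgd (s0d\<^sup>2) (y 0 j)) * cgd (s0d\<^sup>2 + s0d\<^sup>2 * g0d) (y 0 m))"
proof -
  have "(\<integral>\<^sup>+z. P0 y z \<partial>CN01) = (\<Prod>j\<in>{..<M} - {m}. ennreal (cgd (s0d\<^sup>2) (y 0 j)))
      * ennreal (cgd (s0d\<^sup>2 + (cmod (complex_of_real (s0d * sqrt g0d)))\<^sup>2) (y 0 m))"
    unfolding P0_def using s0d m by (intro one_coord) auto
  also have "(cmod (complex_of_real (s0d * sqrt g0d)))\<^sup>2 = s0d\<^sup>2 * g0d"
    using g0d s0d by (simp add: power_mult_distrib norm_mult abs_mult)
  finally show ?thesis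
    using s0d g0d by (simp add: prod_ennreal cgd_nonneg' ennreal_mult[symmetric] prod_nonneg)
qed

definition W :: "(nat \<Rightarrow> nat \<Rightarrow> complex) \<Rightarrow> nat \<Rightarrow> real \<Rightarrow> ennreal" where
  "W y r q = (\<Prod>j\<in>{..<M} - {m}. ennreal (cgd ((srd r)\<^sup>2 + (a2 s0r grd srd r)\<^sup>2 * q) (y r j)))
     * ennreal (cgd ((srd r)\<^sup>2 + (a2 s0r grd srd r)\<^sup>2 * q + (a1 g0r s0r grd srd r)\<^sup>2 * q) (y r m))"

lemma W_meas[measurable]: "W y r \<in> borel_measurable borel"
  unfolding W_def cgd_def by measurable

lemma inner_int:
  assumes r: "r \<in> {1..K}"
  shows "(\<integral>\<^sup>+hS. Er y r hR hS \<partial>CN01) = W y r ((cmod hR)\<^sup>2)"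
proof -
  have s: "(srd r)\<^sup>2 + (cmod (complex_of_real (a2 s0r grd srd r) * hR))\<^sup>2 > 0"
    using srd_pos[OF r] by (simp add: add_pos_nonneg)
  have "(\<integral>\<^sup>+hS. Er y r hR hS \<partial>CN01) =
      (\<Prod>j\<in>{..<M} - {m}. ennreal (cgd ((srd r)\<^sup>2 + (cmod (complex_of_real (a2 s0r grd srd r) * hR))\<^sup>2) (y r j)))
      * ennreal (cgd ((srd r)\<^sup>2 + (cmod (complex_of_real (a2 s0r grd srd r) * hR))\<^sup>2 + (cmod (complex_of_real (a1 g0r s0r grd srd r) * hR))\<^sup>2) (y r m))"
    unfolding Er_def by (rule one_coord[OF s m])
  then show ?thesis
    by (simp add: W_def norm_mult power_mult_distrib)
qed

lemma alg_block:
  fixes S u v q A B :: real and n :: nat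
  assumes S: "S > 0" and u: "u > 0" and v: "v > 0"
  shows "exp (- q) * (exp (- A / (S * u)) / (pi * (S * u)) ^ n) * (exp (- B / (S * v)) / (pi * (S * v)))
     = (1 / (pi * S)) ^ Suc n * (exp (- (q + (A / S) / u + (B / S) / v)) / (u ^ n * v))"
proof -
  have e: "exp (- q) * exp (- A / (S * u)) * exp (- B / (S * v)) = exp (- (q + (A / S) / u + (B / S) / v))"
    by (simp add: exp_add[symmetric] exp_diff[symmetric] field_simps)
  have "exp (- q) * (exp (- A / (S * u)) / (pi * (S * u)) ^ n) * (exp (- B / (S * v)) / (pi * (S * v)))
      = (exp (- q) * exp (- A / (S * u)) * exp (- B / (S * v))) / ((pi * S) ^ Suc n * (u ^ n * v))"
    using S u v by (simp add: power_mult_distrib field_simps)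
  also have "\<dots> = (1 / (pi * S)) ^ Suc n * (exp (- (q + (A / S) / u + (B / S) / v)) / (u ^ n * v))"
    unfolding e using S u v by (simp add: power_divide field_simps)
  finally show ?thesis .
qed

lemma W_eq:
  assumes r: "r \<in> {1..K}" and q: "q \<ge> 0"
  shows "ennreal (exp (- q)) * W y r q = ennreal ((1 / (pi * (srd r)\<^sup>2)) ^ M *
     fI ((s0r r)\<^sup>2 * grd r) ((1 + g0r r) * (s0r r)\<^sup>2 * grd r)
        (((\<Sum>j<M. (cmod (y r j))\<^sup>2) - (cmod (y r m))\<^sup>2) / (srd r)\<^sup>2) ((cmod (y r m))\<^sup>2 / (srd r)\<^sup>2) (real M - 1) q)"
proof -
  have pr: "g0r r > 0" "s0r r > 0" "grd r > 0" "srd r > 0" using posr r by auto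
  define S where "S = (srd r)\<^sup>2"
  define u where "u = 1 + (s0r r)\<^sup>2 * grd r * q"
  define v where "v = 1 + (1 + g0r r) * (s0r r)\<^sup>2 * grd r * q"
  define A where "A = (\<Sum>j\<in>{..<M} - {m}. (cmod (y r j))\<^sup>2)"
  define B where "B = (cmod (y r m))\<^sup>2"
  have S: "S > 0" using pr by (simp add: S_def)
  have u: "u \<ge> 1" "u > 0" using pr q by (simp_all add: u_def add_pos_nonneg)
  have v: "v \<ge> 1" "v > 0" using pr q by (simp_all add: v_def add_pos_nonneg)
  have V1: "(srd r)\<^sup>2 + (a2 s0r grd srd r)\<^sup>2 * q = S * u"
    using pr by (simp add: a2_def S_def u_def power_mult_distrib algebra_simps)
  have V2: "(srd r)\<^sup>2 + (a2 s0r grd srd r)\<^sup>2 * q + (a1 g0r s0r grd srd r)\<^sup>2 * q = S * v"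
    using pr by (simp add: a1_def a2_def S_def v_def power_mult_distrib algebra_simps)
  have card: "card ({..<M} - {m}) = M - 1" using m by simp
  have prodcgd: "(\<Prod>j\<in>{..<M} - {m}. cgd (S * u) (y r j)) = exp (- A / (S * u)) / (pi * (S * u)) ^ (M - 1)"
  proof -
    have "(\<Prod>j\<in>{..<M} - {m}. cgd (S * u) (y r j)) = (\<Prod>j\<in>{..<M} - {m}. exp (- (cmod (y r j))\<^sup>2 / (S * u))) / (\<Prod>j\<in>{..<M} - {m}. pi * (S * u))"
      by (simp add: cgd_def prod_dividef)
    also have "(\<Prod>j\<in>{..<M} - {m}. exp (- (cmod (y r j))\<^sup>2 / (S * u))) = exp (\<Sum>j\<in>{..<M} - {m}. - (cmod (y r j))\<^sup>2 / (S * u))"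
      by (simp add: exp_sum)
    also have "(\<Sum>j\<in>{..<M} - {m}. - (cmod (y r j))\<^sup>2 / (S * u)) = - A / (S * u)"
      by (simp add: A_def sum_divide_distrib[symmetric] sum_negf)
    finally show ?thesis by (simp add: card)
  qed
  have Aeq: "A = (\<Sum>j<M. (cmod (y r j))\<^sup>2) - B"
    unfolding A_def B_def using m by (simp add: sum_diff1)
  have "W y r q = ennreal ((\<Prod>j\<in>{..<M} - {m}. cgd (S * u) (y r j)) * cgd (S * v) (y r m))"
    unfolding W_def V1 using S u v V1 V2
    by (simp add: prod_ennreal cgd_nonneg ennreal_mult[symmetric] prod_nonneg)
  also have "\<dots> = ennreal ((exp (- A / (S * u)) / (pi * (S * u)) ^ (M - 1)) * (exp (- B / (S * v)) / (pi * (S * v))))"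
    by (simp only: prodcgd) (simp add: cgd_def B_def)
  finally have Weq: "W y r q = \<dots>" .
  have "exp (- q) * ((exp (- A / (S * u)) / (pi * (S * u)) ^ (M - 1)) * (exp (- B / (S * v)) / (pi * (S * v))))
      = (1 / (pi * S)) ^ Suc (M - 1) * (exp (- (q + (A / S) / u + (B / S) / v)) / (u ^ (M - 1) * v))"
    using alg_block[OF S u(2) v(2), of q A "M - 1" B] by (simp add: mult.assoc)
  also have "Suc (M - 1) = M" using m by simp
  also have "u ^ (M - 1) = u powr (real M - 1)"
    using u m by (simp add: powr_realpow[symmetric] of_nat_diff)
  finally have "exp (- q) * ((exp (- A / (S * u)) / (pi * (S * u)) ^ (M - 1)) * (exp (- B / (S * v)) / (pi * (S * v))))
     = (1 / (pi * (srd r)\<^sup>2)) ^ M *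
     fI ((s0r r)\<^sup>2 * grd r) ((1 + g0r r) * (s0r r)\<^sup>2 * grd r)
        (((\<Sum>j<M. (cmod (y r j))\<^sup>2) - (cmod (y r m))\<^sup>2) / (srd r)\<^sup>2) ((cmod (y r m))\<^sup>2 / (srd r)\<^sup>2) (real M - 1) q"
    unfolding fI_def Aeq B_def S_def u_def v_def by (simp add: mult.assoc)
  moreover have "ennreal (exp (- q)) * W y r q = ennreal (exp (- q) * ((exp (- A / (S * u)) / (pi * (S * u)) ^ (M - 1)) * (exp (- B / (S * v)) / (pi * (S * v)))))"
    unfolding Weq using S u v by (simp add: ennreal_mult[symmetric])
  ultimately show ?thesis by simp
qed

lemma Rint:
  assumes r: "r \<in> {1..K}"
  shows "(\<integral>\<^sup>+hR. (\<integral>\<^sup>+hS. Er y r hR hS \<partial>CN01) \<partial>CN01) = ennreal ((1 / (pi * (srd r)\<^sup>2)) ^ M *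
     I_int ((s0r r)\<^sup>2 * grd r) ((1 + g0r r) * (s0r r)\<^sup>2 * grd r)
        (((\<Sum>j<M. (cmod (y r j))\<^sup>2) - (cmod (y r m))\<^sup>2) / (srd r)\<^sup>2) ((cmod (y r m))\<^sup>2 / (srd r)\<^sup>2) (real M - 1))"
proof -
  have pr: "g0r r > 0" "s0r r > 0" "grd r > 0" "srd r > 0" using posr r by auto
  let ?e1 = "(s0r r)\<^sup>2 * grd r" and ?e2 = "(1 + g0r r) * (s0r r)\<^sup>2 * grd r"
  let ?b1 = "((\<Sum>j<M. (cmod (y r j))\<^sup>2) - (cmod (y r m))\<^sup>2) / (srd r)\<^sup>2" and ?b2 = "(cmod (y r m))\<^sup>2 / (srd r)\<^sup>2"
  let ?C = "(1 / (pi * (srd r)\<^sup>2)) ^ M"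
  have C: "?C \<ge> 0" by simp
  have b1: "?b1 \<ge> 0"
  proof -
    have "(cmod (y r m))\<^sup>2 \<le> (\<Sum>j<M. (cmod (y r j))\<^sup>2)"
      using m by (intro member_le_sum) auto
    then show ?thesis by simp
  qed
  have a: "?e1 \<ge> 0" "?e2 \<ge> 0" "?b1 \<ge> 0" "?b2 \<ge> 0" "real M - 1 \<ge> 0"
    using pr b1 m by auto
  have "(\<integral>\<^sup>+hR. (\<integral>\<^sup>+hS. Er y r hR hS \<partial>CN01) \<partial>CN01) = (\<integral>\<^sup>+hR. W y r ((cmod hR)\<^sup>2) \<partial>CN01)"
    by (intro nn_integral_cong) (simp add: inner_int[OF r])
  also have "\<dots> = (\<integral>\<^sup>+z. ennreal (exp (- (cmod z)\<^sup>2) / pi) * W y r ((cmod z)\<^sup>2) \<partial>lborel)"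
    by (rule nn_integral_CN01) measurable
  also have "\<dots> = ennreal pi * (\<integral>\<^sup>+q. ennreal (exp (- q) / pi) * W y r q * indicator {0..} q \<partial>lborel)"
    using nn_integral_radial[of "\<lambda>q. ennreal (exp (- q) / pi) * W y r q"] by simp
  also have "\<dots> = (\<integral>\<^sup>+q. ennreal pi * (ennreal (exp (- q) / pi) * W y r q * indicator {0..} q) \<partial>lborel)"
    by (rule nn_integral_cmult[symmetric]) measurable
  also have "\<dots> = (\<integral>\<^sup>+q. ennreal ?C * (ennreal (fI ?e1 ?e2 ?b1 ?b2 (real M - 1) q) * indicator {0..} q) \<partial>lborel)"
  proof (intro nn_integral_cong)
    fix q :: real
    show "ennreal pi * (ennreal (exp (- q) / pi) * W y r q * indicator {0..} q)
        = ennreal ?C * (ennreal (fI ?e1 ?e2 ?b1 ?b2 (real M - 1) q) * indicator {0..} q)"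
    proof (cases "q \<ge> 0")
      case True
      have "ennreal pi * (ennreal (exp (- q) / pi) * W y r q) = ennreal (exp (- q)) * W y r q"
        by (simp add: ennreal_mult[symmetric] mult.assoc[symmetric])
      also have "\<dots> = ennreal (?C * fI ?e1 ?e2 ?b1 ?b2 (real M - 1) q)"
        by (rule W_eq[OF r True])
      finally show ?thesis using True C fI_bounds(1)[OF a True] by (simp add: ennreal_mult less_imp_le mult.assoc)
    qed simp
  qed
  also have "\<dots> = ennreal ?C * (\<integral>\<^sup>+q. ennreal (fI ?e1 ?e2 ?b1 ?b2 (real M - 1) q) * indicator {0..} q \<partial>lborel)"
    apply (rule nn_integral_cmult)
    unfolding fI_def by measurable
  also have "\<dots> = ennreal (?C * I_int ?e1 ?e2 ?b1 ?b2 (real M - 1))"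
    using I_int_nn(1)[OF a] I_int_nn(2)[OF a] C by (simp add: ennreal_mult)
  finally show ?thesis .
qed

lemma COMP:
  "(\<integral>\<^sup>+h. (\<integral>\<^sup>+x. G0 g0d s0d g0r s0r grd srd K M m h x y \<partial>PiM (SR ` {1..K}) (\<lambda>_. CNvec M)) \<partial>PiM (links K) (\<lambda>_. CN01))
   = ennreal ((\<Prod>j\<in>{..<M} - {m}. cgd (s0d\<^sup>2) (y 0 j)) * cgd (s0d\<^sup>2 + s0d\<^sup>2 * g0d) (y 0 m) *
      (\<Prod>r\<in>{1..K}. (1 / (pi * (srd r)\<^sup>2)) ^ M *
         I_int ((s0r r)\<^sup>2 * grd r) ((1 + g0r r) * (s0r r)\<^sup>2 * grd r)
          (((\<Sum>j<M. (cmod (y r j))\<^sup>2) - (cmod (y r m))\<^sup>2) / (srd r)\<^sup>2) ((cmod (y r m))\<^sup>2 / (srd r)\<^sup>2) (real M - 1)))"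
proof -
  have Ipos: "I_int ((s0r r)\<^sup>2 * grd r) ((1 + g0r r) * (s0r r)\<^sup>2 * grd r)
          (((\<Sum>j<M. (cmod (y r j))\<^sup>2) - (cmod (y r m))\<^sup>2) / (srd r)\<^sup>2) ((cmod (y r m))\<^sup>2 / (srd r)\<^sup>2) (real M - 1) > 0"
    if r: "r \<in> {1..K}" for r
  proof -
    have pr: "g0r r > 0" "s0r r > 0" "grd r > 0" "srd r > 0" using posr r by auto
    have "(cmod (y r m))\<^sup>2 \<le> (\<Sum>j<M. (cmod (y r j))\<^sup>2)"
      using m by (intro member_le_sum) auto
    then have b: "((\<Sum>j<M. (cmod (y r j))\<^sup>2) - (cmod (y r m))\<^sup>2) / (srd r)\<^sup>2 \<ge> 0" by simp
    show ?thesis by (rule I_int_nn(2)) (use pr b m in auto)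
  qed
  have "(\<integral>\<^sup>+h. (\<integral>\<^sup>+x. G0 g0d s0d g0r s0r grd srd K M m h x y \<partial>PiM (SR ` {1..K}) (\<lambda>_. CNvec M)) \<partial>PiM (links K) (\<lambda>_. CN01))
     = (\<integral>\<^sup>+h. P0 y (h D0) * (\<Prod>r\<in>{1..K}. Er y r (h (RD r)) (h (SR r))) \<partial>PiM (links K) (\<lambda>_. CN01))"
    by (intro nn_integral_cong) (rule Xint)
  also have "\<dots> = (\<integral>\<^sup>+z. P0 y z \<partial>CN01) * (\<Prod>r\<in>{1..K}. \<integral>\<^sup>+hR. (\<integral>\<^sup>+hS. Er y r hR hS \<partial>CN01) \<partial>CN01)"
    by (rule Hint)
  also have "\<dots> = ennreal ((\<Prod>j\<in>{..<M} - {m}. cgd (s0d\<^sup>2) (y 0 j)) * cgd (s0d\<^sup>2 + s0d\<^sup>2 * g0d) (y 0 m)) *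
      (\<Prod>r\<in>{1..K}. ennreal ((1 / (pi * (srd r)\<^sup>2)) ^ M *
         I_int ((s0r r)\<^sup>2 * grd r) ((1 + g0r r) * (s0r r)\<^sup>2 * grd r)
          (((\<Sum>j<M. (cmod (y r j))\<^sup>2) - (cmod (y r m))\<^sup>2) / (srd r)\<^sup>2) ((cmod (y r m))\<^sup>2 / (srd r)\<^sup>2) (real M - 1)))"
    by (simp add: P0int Rint)
  also have "\<dots> = ennreal ((\<Prod>j\<in>{..<M} - {m}. cgd (s0d\<^sup>2) (y 0 j)) * cgd (s0d\<^sup>2 + s0d\<^sup>2 * g0d) (y 0 m) *
      (\<Prod>r\<in>{1..K}. (1 / (pi * (srd r)\<^sup>2)) ^ M *
         I_int ((s0r r)\<^sup>2 * grd r) ((1 + g0r r) * (s0r r)\<^sup>2 * grd r)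
          (((\<Sum>j<M. (cmod (y r j))\<^sup>2) - (cmod (y r m))\<^sup>2) / (srd r)\<^sup>2) ((cmod (y r m))\<^sup>2 / (srd r)\<^sup>2) (real M - 1)))"
  proof -
    let ?f = "\<lambda>r. (1 / (pi * (srd r)\<^sup>2)) ^ M *
         I_int ((s0r r)\<^sup>2 * grd r) ((1 + g0r r) * (s0r r)\<^sup>2 * grd r)
          (((\<Sum>j<M. (cmod (y r j))\<^sup>2) - (cmod (y r m))\<^sup>2) / (srd r)\<^sup>2) ((cmod (y r m))\<^sup>2 / (srd r)\<^sup>2) (real M - 1)"
    let ?A = "(\<Prod>j\<in>{..<M} - {m}. cgd (s0d\<^sup>2) (y 0 j)) * cgd (s0d\<^sup>2 + s0d\<^sup>2 * g0d) (y 0 m)"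
    have fnn: "\<And>r. r \<in> {1..K} \<Longrightarrow> ?f r \<ge> 0" using Ipos by (simp add: less_imp_le)
    have Ann: "?A \<ge> 0" using s0d g0d by (simp add: prod_nonneg cgd_nonneg')
    have e1: "(\<Prod>r\<in>{1..K}. ennreal (?f r)) = ennreal (\<Prod>r\<in>{1..K}. ?f r)"
      by (rule prod_ennreal) (use fnn in auto)
    have Pnn: "(\<Prod>r\<in>{1..K}. ?f r) \<ge> 0" by (rule prod_nonneg) (use fnn in auto)
    show ?thesis by (simp only: e1 ennreal_mult[OF Ann Pnn])
  qed
  finally show ?thesis .
qed

end

definition gval where
  "gval g0d s0d g0r s0r grd srd K M m y =
     (\<Prod>j\<in>{..<M} - {m}. cgd (s0d\<^sup>2) (y 0 j)) * cgd (s0d\<^sup>2 + s0d\<^sup>2 * g0d) (y 0 m) *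
      (\<Prod>r\<in>{1..K}. (1 / (pi * (srd r)\<^sup>2)) ^ M *
         I_int ((s0r r)\<^sup>2 * grd r) ((1 + g0r r) * (s0r r)\<^sup>2 * grd r)
          (((\<Sum>j<M. (cmod (y r j))\<^sup>2) - (cmod (y r m))\<^sup>2) / (srd r)\<^sup>2) ((cmod (y r m))\<^sup>2 / (srd r)\<^sup>2) (real M - 1))"

definition Cst where
  "Cst g0d s0d srd K M y = (1 / (pi * s0d\<^sup>2)) ^ M / (1 + g0d) * exp (- (\<Sum>j<M. (cmod (y 0 j))\<^sup>2) / s0d\<^sup>2)
      * (\<Prod>r\<in>{1..K}. (1 / (pi * (srd r)\<^sup>2)) ^ M)"

context
  fixes g0d s0d :: real and g0r s0r grd srd :: "nat \<Rightarrow> real" and K M m :: nat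
  assumes g0d: "g0d > 0" and s0d: "s0d > 0"
    and posr: "\<forall>r\<in>{1..K}. g0r r > 0 \<and> s0r r > 0 \<and> grd r > 0 \<and> srd r > 0"
    and m: "m < M"
begin

lemma Ipos':
  "r \<in> {1..K} \<Longrightarrow> I_int ((s0r r)\<^sup>2 * grd r) ((1 + g0r r) * (s0r r)\<^sup>2 * grd r)
          (((\<Sum>j<M. (cmod (y r j))\<^sup>2) - (cmod (y r m))\<^sup>2) / (srd r)\<^sup>2) ((cmod (y r m))\<^sup>2 / (srd r)\<^sup>2) (real M - 1) > 0"
proof -
  assume r: "r \<in> {1..K}"
  have pr: "g0r r > 0" "s0r r > 0" "grd r > 0" "srd r > 0" using posr r by auto
  have "(cmod (y r m))\<^sup>2 \<le> (\<Sum>j<M. (cmod (y r j))\<^sup>2)"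
    using m by (intro member_le_sum) auto
  then have b: "((\<Sum>j<M. (cmod (y r j))\<^sup>2) - (cmod (y r m))\<^sup>2) / (srd r)\<^sup>2 \<ge> 0" by simp
  show ?thesis by (rule I_int_nn(2)) (use pr b m in auto)
qed

lemma gval_metric:
  "gval g0d s0d g0r s0r grd srd K M m y = Cst g0d s0d srd K M y * exp (ml_metric g0d s0d g0r s0r grd srd K M y m)"
proof -
  define I where "I r = I_int ((s0r r)\<^sup>2 * grd r) ((1 + g0r r) * (s0r r)\<^sup>2 * grd r)
          (((\<Sum>j<M. (cmod (y r j))\<^sup>2) - (cmod (y r m))\<^sup>2) / (srd r)\<^sup>2) ((cmod (y r m))\<^sup>2 / (srd r)\<^sup>2) (real M - 1)" for r
  define S where "S = s0d\<^sup>2"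
  define a where "a = (cmod (y 0 m))\<^sup>2"
  define T where "T = (\<Sum>j<M. (cmod (y 0 j))\<^sup>2)"
  have S: "S > 0" using s0d by (simp add: S_def)
  have Sg: "S + S * g0d > 0" "1 + g0d > 0" using S g0d by (simp_all add: add_pos_pos)
  have Ip: "r \<in> {1..K} \<Longrightarrow> I r > 0" for r unfolding I_def by (rule Ipos')
  have card: "card ({..<M} - {m}) = M - 1" using m by simp
  have p0: "(\<Prod>j\<in>{..<M} - {m}. cgd S (y 0 j)) = exp (- (T - a) / S) / (pi * S) ^ (M - 1)"
  proof -
    have "(\<Prod>j\<in>{..<M} - {m}. cgd S (y 0 j)) = (\<Prod>j\<in>{..<M} - {m}. exp (- (cmod (y 0 j))\<^sup>2 / S)) / (\<Prod>j\<in>{..<M} - {m}. pi * S)"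
      by (simp add: cgd_def prod_dividef)
    also have "(\<Prod>j\<in>{..<M} - {m}. exp (- (cmod (y 0 j))\<^sup>2 / S)) = exp (\<Sum>j\<in>{..<M} - {m}. - (cmod (y 0 j))\<^sup>2 / S)"
      by (simp add: exp_sum)
    also have "(\<Sum>j\<in>{..<M} - {m}. - (cmod (y 0 j))\<^sup>2 / S) = - (T - a) / S"
      using m S by (simp add: T_def a_def sum_divide_distrib[symmetric] sum_negf sum_diff1) (simp add: field_simps)
    finally show ?thesis by (simp add: card)
  qed
  have B0: "(\<Prod>j\<in>{..<M} - {m}. cgd S (y 0 j)) * cgd (S + S * g0d) (y 0 m)
      = (1 / (pi * S)) ^ M / (1 + g0d) * exp (- T / S) * exp (g0d / (1 + g0d) * a / S)"
  proof -
    have "(\<Prod>j\<in>{..<M} - {m}. cgd S (y 0 j)) * cgd (S + S * g0d) (y 0 m)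
        = (exp (- (T - a) / S) * exp (- a / (S + S * g0d))) / ((pi * S) ^ (M - 1) * (pi * S) * (1 + g0d))"
      apply (subst p0)
      unfolding cgd_def a_def using S g0d by (simp add: field_simps)
    also have "exp (- (T - a) / S) * exp (- a / (S + S * g0d)) = exp (- T / S) * exp (g0d / (1 + g0d) * a / S)"
    proof -
      have "- (T - a) / S + - a / (S + S * g0d) = - T / S + g0d / (1 + g0d) * a / S"
        using S g0d Sg by (simp add: field_simps)
      then show ?thesis by (simp add: exp_add[symmetric])
    qed
    also have "(pi * S) ^ (M - 1) * (pi * S) = (pi * S) ^ M"
    proof -
      have "M = Suc (M - 1)" using m by simp
      then show ?thesis by (metis power_Suc2)
    qed
    finally show ?thesis using S g0d by (simp add: power_divide field_simps)
  qed
  have pI: "(\<Prod>r\<in>{1..K}. I r) = exp (\<Sum>r\<in>{1..K}. ln (I r))"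
    using Ip by (simp add: exp_sum)
  have "gval g0d s0d g0r s0r grd srd K M m y
      = ((1 / (pi * S)) ^ M / (1 + g0d) * exp (- T / S) * exp (g0d / (1 + g0d) * a / S))
        * ((\<Prod>r\<in>{1..K}. (1 / (pi * (srd r)\<^sup>2)) ^ M) * (\<Prod>r\<in>{1..K}. I r))"
    unfolding gval_def I_def[symmetric] S_def[symmetric] by (subst B0[symmetric]) (simp add: prod.distrib)
  also have "\<dots> = Cst g0d s0d srd K M y * exp (ml_metric g0d s0d g0r s0r grd srd K M y m)"
    unfolding Cst_def ml_metric_def pI I_def[symmetric] S_def[symmetric] T_def[symmetric] a_def[symmetric]
    by (simp add: exp_add)
  finally show ?thesis .
qed

end

lemma Cst_pos: "s0d > 0 \<Longrightarrow> g0d > 0 \<Longrightarrow> \<forall>r\<in>{1..K}. srd r > 0 \<Longrightarrow> Cst g0d s0d srd K M y > 0"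
  unfolding Cst_def by (auto intro!: prod_pos mult_pos_pos divide_pos_pos)

lemma argmax_cong_exp:
  assumes "\<And>m. m < M \<Longrightarrow> f m = c * exp (\<phi> m)" and "c > 0"
  shows "argmax_set M f = argmax_set M \<phi>"
  using assms unfolding argmax_set_def by auto

lemma obs_restrict:
  "obs g0d s0d g0r s0r grd srd K M m (restrict h (links K)) (restrict n (links K)) = obs g0d s0d g0r s0r grd srd K M m h n"
  unfolding obs_def by (intro restrict_ext) (auto simp: links_def)

context
  fixes g0d s0d :: real and g0r s0r grd srd :: "nat \<Rightarrow> real" and K M m :: nat
  assumes g0d: "g0d > 0" and s0d: "s0d > 0"
    and posr: "\<forall>r\<in>{1..K}. g0r r > 0 \<and> s0r r > 0 \<and> grd r > 0 \<and> srd r > 0"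
    and m: "m < M"
begin

lemma posr': "\<forall>r\<in>{1..K}. srd r > 0" using posr by auto

lemma gval_pos: "gval g0d s0d g0r s0r grd srd K M m y > 0"
  unfolding gval_metric[OF g0d s0d posr m] using Cst_pos[OF s0d g0d posr'] by (intro mult_pos_pos) auto

lemma gval_Gint:
  "(\<integral>\<^sup>+h. (\<integral>\<^sup>+x. G0 g0d s0d g0r s0r grd srd K M m h x y \<partial>PiM (SR ` {1..K}) (\<lambda>_. CNvec M)) \<partial>PiM (links K) (\<lambda>_. CN01))
   = ennreal (gval g0d s0d g0r s0r grd srd K M m y)"
  unfolding gval_def by (rule COMP[OF g0d s0d posr m])

lemma gval_meas: "gval g0d s0d g0r s0r grd srd K M m \<in> borel_measurable (obs_space K M)"
proof -
  let ?H = "PiM (links K) (\<lambda>_. CN01)" and ?X = "PiM (SR ` {1..K}) (\<lambda>_. CNvec M)"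
  interpret H: sigma_finite_measure ?H
    by (intro prob_space_imp_sigma_finite prob_space_PiM prob_space_CN01)
  interpret X: sigma_finite_measure ?X
    by (intro prob_space_imp_sigma_finite prob_space_PiM prob_space_CNvec)
  have "(\<lambda>y. \<integral>\<^sup>+h. (\<integral>\<^sup>+x. G0 g0d s0d g0r s0r grd srd K M m h x y \<partial>?X) \<partial>?H) \<in> borel_measurable (obs_space K M)"
    by measurable
  then have "(\<lambda>y. enn2real (\<integral>\<^sup>+h. (\<integral>\<^sup>+x. G0 g0d s0d g0r s0r grd srd K M m h x y \<partial>?X) \<partial>?H)) \<in> borel_measurable (obs_space K M)"
    by measurable
  moreover have "(\<lambda>y. enn2real (\<integral>\<^sup>+h. (\<integral>\<^sup>+x. G0 g0d s0d g0r s0r grd srd K M m h x y \<partial>?X) \<partial>?H)) = gval g0d s0d g0r s0r grd srd K M m"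
    unfolding fun_eq_iff gval_Gint using gval_pos by (simp add: less_imp_le)
  ultimately show ?thesis by simp
qed

lemma MAIN:
  "distr (fade_noise_law K M) (obs_space K M) (\<lambda>\<omega>. obs g0d s0d g0r s0r grd srd K M m (fst \<omega>) (snd \<omega>))
   = density (obs_space K M) (\<lambda>y. ennreal (gval g0d s0d g0r s0r grd srd K M m y))"
proof (rule measure_eqI)
  let ?F = "\<lambda>\<omega>. obs g0d s0d g0r s0r grd srd K M m (fst \<omega>) (snd \<omega>)"
  have Fm: "?F \<in> measurable (fade_noise_law K M) (obs_space K M)"
    unfolding fade_noise_law_def by measurable
  show "sets (distr (fade_noise_law K M) (obs_space K M) ?F) = sets (density (obs_space K M) (\<lambda>y. ennreal (gval g0d s0d g0r s0r grd srd K M m y)))"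
    by simp
  fix A assume "A \<in> sets (distr (fade_noise_law K M) (obs_space K M) ?F)"
  then have A[measurable]: "A \<in> sets (obs_space K M)" by simp
  have "emeasure (distr (fade_noise_law K M) (obs_space K M) ?F) A = (\<integral>\<^sup>+y. indicator A y \<partial>distr (fade_noise_law K M) (obs_space K M) ?F)"
    by (simp add: nn_integral_indicator)
  also have "\<dots> = (\<integral>\<^sup>+\<omega>. indicator A (?F \<omega>) \<partial>fade_noise_law K M)"
    by (rule nn_integral_distr[OF Fm]) simp
  also have "\<dots> = (\<integral>\<^sup>+y. (\<integral>\<^sup>+h. (\<integral>\<^sup>+x. G0 g0d s0d g0r s0r grd srd K M m h x y \<partial>PiM (SR ` {1..K}) (\<lambda>_. CNvec M)) \<partial>PiM (links K) (\<lambda>_. CN01)) * indicator A y \<partial>obs_space K M)"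
    by (rule stepB[OF s0d posr']) simp
  also have "\<dots> = (\<integral>\<^sup>+y. ennreal (gval g0d s0d g0r s0r grd srd K M m y) * indicator A y \<partial>obs_space K M)"
    unfolding gval_Gint ..
  also have "\<dots> = emeasure (density (obs_space K M) (\<lambda>y. ennreal (gval g0d s0d g0r s0r grd srd K M m y))) A"
    using gval_meas by (simp add: emeasure_density)
  finally show "emeasure (distr (fade_noise_law K M) (obs_space K M) ?F) A = emeasure (density (obs_space K M) (\<lambda>y. ennreal (gval g0d s0d g0r s0r grd srd K M m y))) A" .
qed

end

lemma argmax_set_cong: "(\<And>m. m < M \<Longrightarrow> f m = f' m) \<Longrightarrow> argmax_set M f = argmax_set M f'"
  unfolding argmax_set_def by auto

theorem theorem1:
  fixes P :: "'a measure"
    and h :: "link \<Rightarrow> 'a \<Rightarrow> complex"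
    and n :: "link \<Rightarrow> 'a \<Rightarrow> nat \<Rightarrow> complex"
    and M K :: nat
    and g0d s0d :: real
    and g0r s0r grd srd :: "nat \<Rightarrow> real"
  assumes "prob_space P"
    and "M \<ge> 2" and "K \<ge> 1"
    and "g0d > 0" and "s0d > 0"
    and "\<forall>r\<in>{1..K}. g0r r > 0 \<and> s0r r > 0 \<and> grd r > 0 \<and> srd r > 0"
    and "(\<lambda>\<omega>. (\<lambda>l\<in>links K. h l \<omega>, \<lambda>l\<in>links K. n l \<omega>)) \<in> measurable P (fade_noise_law K M)"
    and "distr P (fade_noise_law K M) (\<lambda>\<omega>. (\<lambda>l\<in>links K. h l \<omega>, \<lambda>l\<in>links K. n l \<omega>))
           = fade_noise_law K M"
  defines "Y \<equiv> \<lambda>m \<omega>. obs g0d s0d g0r s0r grd srd K M m (\<lambda>l. h l \<omega>) (\<lambda>l. n l \<omega>)"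
  shows "(\<exists>g :: nat \<Rightarrow> (nat \<Rightarrow> nat \<Rightarrow> complex) \<Rightarrow> real.
            (\<forall>m<M. (\<forall>y. 0 \<le> g m y) \<and> g m \<in> borel_measurable (obs_space K M)
                  \<and> distr P (obs_space K M) (Y m) = density (obs_space K M) (\<lambda>y. ennreal (g m y)))
            \<and> (\<forall>y\<in>space (obs_space K M).
                  argmax_set M (\<lambda>m. g m y) = argmax_set M (ml_metric g0d s0d g0r s0r grd srd K M y)))
       \<and> (\<forall>g :: nat \<Rightarrow> (nat \<Rightarrow> nat \<Rightarrow> complex) \<Rightarrow> real.
            (\<forall>m<M. (\<forall>y. 0 \<le> g m y) \<and> g m \<in> borel_measurable (obs_space K M)
                  \<and> distr P (obs_space K M) (Y m) = density (obs_space K M) (\<lambda>y. ennreal (g m y)))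
            \<longrightarrow> (AE y in obs_space K M.
                  argmax_set M (\<lambda>m. g m y) = argmax_set M (ml_metric g0d s0d g0r s0r grd srd K M y)))"
proof -
  note P = assms(1) and g0d = assms(4) and s0d = assms(5) and posr = assms(6)
    and \<Psi>m = assms(7) and \<Psi>d = assms(8)
  define \<Psi> where "\<Psi> = (\<lambda>\<omega>. (\<lambda>l\<in>links K. h l \<omega>, \<lambda>l\<in>links K. n l \<omega>))"
  define F where "F m = (\<lambda>\<omega>. obs g0d s0d g0r s0r grd srd K M m (fst \<omega>) (snd \<omega>))" for m
  define gv where "gv = (\<lambda>m y. gval g0d s0d g0r s0r grd srd K M m y)"
  have Ym: "Y m = F m \<circ> \<Psi>" for m
    unfolding Y_def F_def \<Psi>_def by (simp add: fun_eq_iff obs_restrict)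
  have Fm: "F m \<in> measurable (fade_noise_law K M) (obs_space K M)" for m
    unfolding F_def fade_noise_law_def by measurable
  have \<Psi>m': "\<Psi> \<in> measurable P (fade_noise_law K M)" using \<Psi>m by (simp add: \<Psi>_def)
  have Ymeas: "Y m \<in> measurable P (obs_space K M)" for m
    unfolding Ym by (rule measurable_comp[OF \<Psi>m' Fm])
  have D: "distr P (obs_space K M) (Y m) = density (obs_space K M) (\<lambda>y. ennreal (gv m y))" if m: "m < M" for m
  proof -
    have "distr P (obs_space K M) (Y m) = distr P (obs_space K M) (F m \<circ> \<Psi>)" by (simp add: Ym)
    also have "\<dots> = distr (distr P (fade_noise_law K M) \<Psi>) (obs_space K M) (F m)"
      by (rule distr_distr[OF Fm \<Psi>m', symmetric])
    also have "\<dots> = distr (fade_noise_law K M) (obs_space K M) (F m)"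
      using \<Psi>d by (simp add: \<Psi>_def)
    also have "\<dots> = density (obs_space K M) (\<lambda>y. ennreal (gv m y))"
      unfolding F_def gv_def by (rule MAIN[OF g0d s0d posr m])
    finally show ?thesis .
  qed
  have gvpos: "m < M \<Longrightarrow> gv m y > 0" for m y
    unfolding gv_def by (rule gval_pos[OF g0d s0d posr])
  have gvmeas: "m < M \<Longrightarrow> gv m \<in> borel_measurable (obs_space K M)" for m
    unfolding gv_def by (rule gval_meas[OF g0d s0d posr])
  have posr': "\<forall>r\<in>{1..K}. srd r > 0" using posr by auto
  have am: "argmax_set M (\<lambda>m. gv m y) = argmax_set M (ml_metric g0d s0d g0r s0r grd srd K M y)" for y
  proof (rule argmax_cong_exp)
    show "gv m y = Cst g0d s0d srd K M y * exp (ml_metric g0d s0d g0r s0r grd srd K M y m)" if "m < M" for m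
      unfolding gv_def by (rule gval_metric[OF g0d s0d posr that])
    show "Cst g0d s0d srd K M y > 0" by (rule Cst_pos[OF s0d g0d posr'])
  qed
  have part1: "(\<forall>m<M. (\<forall>y. 0 \<le> gv m y) \<and> gv m \<in> borel_measurable (obs_space K M)
                  \<and> distr P (obs_space K M) (Y m) = density (obs_space K M) (\<lambda>y. ennreal (gv m y)))
            \<and> (\<forall>y\<in>space (obs_space K M).
                  argmax_set M (\<lambda>m. gv m y) = argmax_set M (ml_metric g0d s0d g0r s0r grd srd K M y))"
    using gvpos gvmeas D am by (auto simp: less_imp_le)
  have part2: "AE y in obs_space K M. argmax_set M (\<lambda>m. g m y) = argmax_set M (ml_metric g0d s0d g0r s0r grd srd K M y)"
    if g: "\<forall>m<M. (\<forall>y. 0 \<le> g m y) \<and> g m \<in> borel_measurable (obs_space K M)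
                  \<and> distr P (obs_space K M) (Y m) = density (obs_space K M) (\<lambda>y. ennreal (g m y))" for g
  proof -
    have AEm: "AE y in obs_space K M. g m y = gv m y" if m: "m \<in> {..<M}" for m
    proof -
      have sf: "sigma_finite_measure (density (obs_space K M) (\<lambda>y. ennreal (gv m y)))"
      proof -
        have "prob_space (distr P (obs_space K M) (Y m))"
          by (rule prob_space.prob_space_distr[OF P Ymeas])
        then show ?thesis using D[of m] m by (simp add: prob_space_imp_sigma_finite)
      qed
      have "density (obs_space K M) (\<lambda>y. ennreal (gv m y)) = density (obs_space K M) (\<lambda>y. ennreal (g m y))"
        using D[of m] g m by auto
      then have "AE y in obs_space K M. ennreal (gv m y) = ennreal (g m y)"
        using sigma_finite_density_unique[of "\<lambda>y. ennreal (gv m y)" "obs_space K M" "\<lambda>y. ennreal (g m y)"] sf g m gvmeas[of m]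
        by auto
      then show ?thesis
        by eventually_elim (use g m gvpos[of m] in \<open>auto simp: less_imp_le\<close>)
    qed
    have "AE y in obs_space K M. \<forall>m\<in>{..<M}. g m y = gv m y"
      by (rule eventually_ball_finite) (use AEm in auto)
    then show ?thesis
    proof eventually_elim
      case (elim y)
      then have "argmax_set M (\<lambda>m. g m y) = argmax_set M (\<lambda>m. gv m y)"
        by (intro argmax_set_cong) auto
      then show ?case using am by simp
    qed
  qed
  show ?thesis using part1 part2 by blast
qed

end
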